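(* Fix $\varepsilon>0$ and $\gamma\in(0,1)$, and let $d_N=(1-\gamma)\sqrt{\frac{\log N}{2\log\log N}}$. For a group $G$ of order $N$, an integer $d$ with $2\leqslant d\leqslant d_N$, and $p\geqslant \sqrt[d]{d!(1+\varepsilon)\frac{\log N}{N^{d-1}}}$, let $\Gamma\in\mathcal{G}(G,p)$. Then with high probability the diameter of $\Gamma$ is at most $d$; that is, $\Pr(\operatorname{diam}(\Gamma)>d)\to 0$ as $N\to\infty$, uniformly over all groups $G$ of order $N$, all such $d$ and all such $p$.
   Context: For a group $G$ and a subset $S\subseteq G$, the (undirected) Cayley graph $\Gamma(G;S)$ has vertex set $G$ and an edge between $g\neq h$ iff $g^{-1}h\in S$ or $h^{-1}g\in S$ (loops and multiple edges ignored). The model $\mathcal{G}(G,p)$ is the probability space of Cayley graphs $\Gamma(G;S)$ where each element of $G$ is put in $S$ independently with probability $p$. The diameter of a disconnected graph is infinite. "With high probability" means the error probability tends to $0$ as $N\to\infty$, uniformly over the class of groups under consideration. *)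

theory Defs
  imports "HOL-Algebra.Group" "HOL-Probability.Probability" "HOL-Library.Extended_Nat"
begin

definition cayley_adj :: "('a, 'b) monoid_scheme \<Rightarrow> 'a set \<Rightarrow> 'a \<Rightarrow> 'a \<Rightarrow> bool" where
  "cayley_adj G S g h \<longleftrightarrow> g \<in> carrier G \<and> h \<in> carrier G \<and> g \<noteq> h \<and>
     (inv\<^bsub>G\<^esub> g \<otimes>\<^bsub>G\<^esub> h \<in> S \<or> inv\<^bsub>G\<^esub> h \<otimes>\<^bsub>G\<^esub> g \<in> S)"

text \<open>Graph distance: least length of a walk; infinite if no walk exists.\<close>
definition cayley_dist :: "('a, 'b) monoid_scheme \<Rightarrow> 'a set \<Rightarrow> 'a \<Rightarrow> 'a \<Rightarrow> enat" where
  "cayley_dist G S g h = (INF n \<in> {n. (cayley_adj G S ^^ n) g h}. enat n)"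

definition cayley_diam :: "('a, 'b) monoid_scheme \<Rightarrow> 'a set \<Rightarrow> enat" where
  "cayley_diam G S = (SUP g \<in> carrier G. SUP h \<in> carrier G. cayley_dist G S g h)"

definition d_bound :: "real \<Rightarrow> nat \<Rightarrow> real" where
  "d_bound \<gamma> N = (1 - \<gamma>) * sqrt (ln (real N) / (2 * ln (ln (real N))))"

definition random_subset :: "('a, 'b) monoid_scheme \<Rightarrow> real \<Rightarrow> ('a \<Rightarrow> bool) pmf" where
  "random_subset G p = Pi_pmf (carrier G) False (\<lambda>_. bernoulli_pmf p)"

end

theory Submission
  imports Defs "HOL-Real_Asymp.Real_Asymp"
begin

definition meas :: "real \<Rightarrow> 'a set \<Rightarrow> ('a set \<Rightarrow> bool) \<Rightarrow> real" where
  "meas p U P = (\<Sum>S\<in>{S. S \<subseteq> U \<and> P S}. p ^ card S * (1 - p) ^ card (U - S))"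

lemma meas_empty: "meas p {} P = (if P {} then 1 else 0)"
proof -
  have "{S. S \<subseteq> {} \<and> P S} = (if P {} then {{}} else {})" by auto
  then show ?thesis by (simp add: meas_def)
qed

lemma meas_insert:
  assumes "finite U" "a \<notin> U"
  shows "meas p (insert a U) P = (1 - p) * meas p U P + p * meas p U (\<lambda>S. P (insert a S))"
proof -
  let ?w = "\<lambda>V S. p ^ card S * (1 - p) ^ card (V - S)"
  have eq: "{S. S \<subseteq> insert a U \<and> P S} = {S. S \<subseteq> U \<and> P S} \<union> insert a ` {S. S \<subseteq> U \<and> P (insert a S)}"
  proof (intro equalityI subsetI)
    fix S assume "S \<in> {S. S \<subseteq> insert a U \<and> P S}"
    then show "S \<in> {S. S \<subseteq> U \<and> P S} \<union> insert a ` {S. S \<subseteq> U \<and> P (insert a S)}"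
    proof (cases "a \<in> S")
      case True
      then have "S = insert a (S - {a})" by auto
      then show ?thesis using \<open>S \<in> _\<close> by (smt (verit) Diff_subset_conv Un_iff image_eqI insert_is_Un mem_Collect_eq)
    qed auto
  qed auto
  have fin: "finite {S. S \<subseteq> U \<and> P S}" "finite (insert a ` {S. S \<subseteq> U \<and> P (insert a S)})"
    using assms by (auto intro: finite_subset[of _ "Pow U"])
  have disj: "{S. S \<subseteq> U \<and> P S} \<inter> insert a ` {S. S \<subseteq> U \<and> P (insert a S)} = {}"
    using assms by auto
  have inj: "inj_on (insert a) {S. S \<subseteq> U \<and> P (insert a S)}"
    using assms by (auto simp: inj_on_def)
  have s1: "(\<Sum>S\<in>{S. S \<subseteq> U \<and> P S}. ?w (insert a U) S) = (1 - p) * meas p U P"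
  proof -
    have "\<And>S. S \<subseteq> U \<Longrightarrow> card (insert a U - S) = Suc (card (U - S))"
    proof -
      fix S assume "S \<subseteq> U"
      then have "insert a U - S = insert a (U - S)" using assms by auto
      then show "card (insert a U - S) = Suc (card (U - S))" using assms by simp
    qed
    then show ?thesis by (simp add: meas_def sum_distrib_left mult_ac)
  qed
  have s2: "(\<Sum>S\<in>insert a ` {S. S \<subseteq> U \<and> P (insert a S)}. ?w (insert a U) S) = p * meas p U (\<lambda>S. P (insert a S))"
  proof -
    have "(\<Sum>S\<in>insert a ` {S. S \<subseteq> U \<and> P (insert a S)}. ?w (insert a U) S)
       = (\<Sum>S\<in>{S. S \<subseteq> U \<and> P (insert a S)}. ?w (insert a U) (insert a S))"
      by (rule sum.reindex[OF inj, unfolded comp_def])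
    also have "\<dots> = (\<Sum>S\<in>{S. S \<subseteq> U \<and> P (insert a S)}. p * ?w U S)"
    proof (rule sum.cong)
      fix S assume "S \<in> {S. S \<subseteq> U \<and> P (insert a S)}"
      then have "S \<subseteq> U" by auto
      moreover have "finite S" using \<open>S \<subseteq> U\<close> assms(1) by (rule finite_subset)
      moreover have "a \<notin> S" using \<open>S \<subseteq> U\<close> assms(2) by auto
      ultimately have "card (insert a S) = Suc (card S)" "insert a U - insert a S = U - S"
        using assms by auto
      then show "?w (insert a U) (insert a S) = p * ?w U S" by simp
    qed simp
    finally show ?thesis by (simp add: meas_def sum_distrib_left)
  qed
  show ?thesis unfolding meas_def[of p "insert a U"] eq
    by (subst sum.union_disjoint[OF fin disj]) (use s1 s2 in simp)
qed

lemma meas_nonneg: "0 \<le> p \<Longrightarrow> p \<le> 1 \<Longrightarrow> 0 \<le> meas p U P"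
  unfolding meas_def by (intro sum_nonneg) auto

lemma meas_mono:
  assumes "finite U" "0 \<le> p" "p \<le> 1" "\<And>S. S \<subseteq> U \<Longrightarrow> P S \<Longrightarrow> Q S"
  shows "meas p U P \<le> meas p U Q"
  unfolding meas_def
  by (rule sum_mono2) (use assms in \<open>auto intro: finite_subset[of _ "Pow U"]\<close>)

lemma meas_True: "finite U \<Longrightarrow> meas p U (\<lambda>_. True) = 1"
  by (induction U rule: finite_induct) (auto simp: meas_empty meas_insert)

lemma meas_split:
  assumes "finite U"
  shows "meas p U P = meas p U (\<lambda>S. P S \<and> Q S) + meas p U (\<lambda>S. P S \<and> \<not> Q S)"
proof -
  have "{S. S \<subseteq> U \<and> P S} = {S. S \<subseteq> U \<and> P S \<and> Q S} \<union> {S. S \<subseteq> U \<and> P S \<and> \<not> Q S}" by auto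
  moreover have "finite {S. S \<subseteq> U \<and> P S \<and> Q S}" "finite {S. S \<subseteq> U \<and> P S \<and> \<not> Q S}"
    using assms by (auto intro: finite_subset[of _ "Pow U"])
  ultimately show ?thesis unfolding meas_def
    by (subst sum.union_disjoint[symmetric]) auto
qed

lemma meas_le1: "finite U \<Longrightarrow> 0 \<le> p \<Longrightarrow> p \<le> 1 \<Longrightarrow> meas p U P \<le> 1"
  using meas_mono[of U p P "\<lambda>_. True"] meas_True[of U p] by auto

lemma meas_union_bound:
  assumes "finite U" "finite J" "0 \<le> p" "p \<le> 1"
  shows "meas p U (\<lambda>S. P S \<and> (\<exists>j\<in>J. Q j S)) \<le> (\<Sum>j\<in>J. meas p U (\<lambda>S. P S \<and> Q j S))"
  using assms(2)
proof (induction J rule: finite_induct)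
  case empty
  then show ?case by (simp add: meas_def)
next
  case (insert j J)
  have "meas p U (\<lambda>S. P S \<and> (\<exists>j\<in>insert j J. Q j S))
     = meas p U (\<lambda>S. P S \<and> (\<exists>j\<in>insert j J. Q j S) \<and> Q j S) + meas p U (\<lambda>S. P S \<and> (\<exists>j\<in>insert j J. Q j S) \<and> \<not> Q j S)"
    using meas_split[OF assms(1), of p "\<lambda>S. P S \<and> (\<exists>j\<in>insert j J. Q j S)" "Q j"] by (simp add: conj_assoc)
  also have "\<dots> \<le> meas p U (\<lambda>S. P S \<and> Q j S) + meas p U (\<lambda>S. P S \<and> (\<exists>j\<in>J. Q j S))"
    by (intro add_mono meas_mono assms) auto
  also have "\<dots> \<le> meas p U (\<lambda>S. P S \<and> Q j S) + (\<Sum>j\<in>J. meas p U (\<lambda>S. P S \<and> Q j S))"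
    using insert by simp
  finally show ?case using insert by simp
qed

lemma harris:
  assumes "finite U" "0 \<le> p" "p \<le> 1" "mono P" "antimono Q"
  shows "meas p U (\<lambda>S. P S \<and> Q S) \<le> meas p U P * meas p U Q"
  using assms(1,4,5)
proof (induction U arbitrary: P Q rule: finite_induct)
  case empty
  then show ?case by (simp add: meas_empty)
next
  case (insert a U)
  let ?P1 = "\<lambda>S. P (insert a S)" and ?Q1 = "\<lambda>S. Q (insert a S)"
  have m1: "mono ?P1" "antimono ?Q1"
  proof -
    show "mono ?P1"
    proof (rule monoI)
      fix x y :: "'a set" assume "x \<le> y"
      then have "insert a x \<le> insert a y" by auto
      then show "?P1 x \<le> ?P1 y" by (rule monoD[OF insert.prems(1)])
    qed
    show "antimono ?Q1"
    proof (rule antimonoI)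
      fix x y :: "'a set" assume "x \<le> y"
      then have "insert a x \<le> insert a y" by auto
      then show "?Q1 y \<le> ?Q1 x" by (rule antimonoD[OF insert.prems(2)])
    qed
  qed
  define a0 where "a0 = meas p U P"
  define a1 where "a1 = meas p U ?P1"
  define b0 where "b0 = meas p U Q"
  define b1 where "b1 = meas p U ?Q1"
  have h0: "meas p U (\<lambda>S. P S \<and> Q S) \<le> a0 * b0" using insert by (simp add: a0_def b0_def)
  have h1: "meas p U (\<lambda>S. ?P1 S \<and> ?Q1 S) \<le> a1 * b1" using insert.IH[OF m1] by (simp add: a1_def b1_def)
  have pm: "\<And>S. P S \<Longrightarrow> P (insert a S)"
    by (metis monoD[OF insert.prems(1)] le_boolD subset_insertI)
  have qm: "\<And>S. Q (insert a S) \<Longrightarrow> Q S"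
    by (metis antimonoD[OF insert.prems(2)] le_boolD subset_insertI)
  have "a0 \<le> a1" unfolding a0_def a1_def
    by (rule meas_mono) (use insert assms pm in auto)
  moreover have "b1 \<le> b0" unfolding b0_def b1_def
    by (rule meas_mono) (use insert assms qm in auto)
  ultimately have key: "0 \<le> p * (1 - p) * ((a1 - a0) * (b0 - b1))"
    using assms by (intro mult_nonneg_nonneg) auto
  have "meas p (insert a U) (\<lambda>S. P S \<and> Q S) = (1 - p) * meas p U (\<lambda>S. P S \<and> Q S) + p * meas p U (\<lambda>S. ?P1 S \<and> ?Q1 S)"
    using insert by (simp add: meas_insert)
  also have "\<dots> \<le> (1 - p) * (a0 * b0) + p * (a1 * b1)"
    using h0 h1 assms by (intro add_mono mult_left_mono) auto
  also have "\<dots> \<le> ((1 - p) * a0 + p * a1) * ((1 - p) * b0 + p * b1)"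
    using key by (simp add: algebra_simps)
  also have "\<dots> = meas p (insert a U) P * meas p (insert a U) Q"
    using insert by (simp add: meas_insert a0_def a1_def b0_def b1_def)
  finally show ?case .
qed

lemma meas_antimono_p:
  assumes "finite U" "0 \<le> p" "p \<le> p'" "p' \<le> 1" "antimono Q"
  shows "meas p' U Q \<le> meas p U Q"
  using assms(1,5)
proof (induction U arbitrary: Q rule: finite_induct)
  case empty
  then show ?case by (simp add: meas_empty)
next
  case (insert a U)
  let ?Q1 = "\<lambda>S. Q (insert a S)"
  have m1: "antimono ?Q1"
  proof (rule antimonoI)
    fix x y :: "'a set" assume "x \<le> y"
    then have "insert a x \<le> insert a y" by auto
    then show "?Q1 y \<le> ?Q1 x" by (rule antimonoD[OF insert.prems(1)])
  qed
  have i0: "meas p' U Q \<le> meas p U Q" and i1: "meas p' U ?Q1 \<le> meas p U ?Q1" using insert m1 by auto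
  have qm: "\<And>S. Q (insert a S) \<Longrightarrow> Q S"
    by (metis antimonoD[OF insert.prems(1)] le_boolD subset_insertI)
  have b0: "meas p U ?Q1 \<le> meas p U Q"
    by (rule meas_mono) (use insert assms qm in auto)
  have "meas p' (insert a U) Q = (1 - p') * meas p' U Q + p' * meas p' U ?Q1"
    using insert by (simp add: meas_insert)
  also have "\<dots> \<le> (1 - p') * meas p U Q + p' * meas p U ?Q1"
    using i0 i1 assms by (intro add_mono mult_left_mono) auto
  also have "\<dots> \<le> (1 - p) * meas p U Q + p * meas p U ?Q1"
  proof -
    have "(p' - p) * (meas p U Q - meas p U ?Q1) \<ge> 0" using b0 assms by auto
    then show ?thesis by (simp add: algebra_simps)
  qed
  also have "\<dots> = meas p (insert a U) Q" using insert by (simp add: meas_insert)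
  finally show ?case .
qed

lemma meas_indep:
  assumes "finite U" "X \<subseteq> U" "\<And>S. Q S = Q (S - X)"
  shows "meas p U (\<lambda>S. X \<subseteq> S \<and> Q S) = p ^ card X * meas p U Q"
  using assms
proof (induction U arbitrary: X Q rule: finite_induct)
  case empty
  then show ?case by (simp add: meas_empty)
next
  case (insert a U)
  show ?case
  proof (cases "a \<in> X")
    case True
    have q1: "\<And>S. Q (insert a S) = Q S"
      using insert.prems(2) True by (metis Diff_insert_absorb insert_Diff_if insert_Diff_single)
    have z: "meas p U (\<lambda>S. X \<subseteq> S \<and> Q S) = 0"
    proof -
      have "{S. S \<subseteq> U \<and> X \<subseteq> S \<and> Q S} = {}" using True insert by auto
      then show ?thesis unfolding meas_def by (simp only: sum.empty)
    qed
    have "X - {a} \<subseteq> U" using insert True by auto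
    moreover have "\<And>S. Q S = Q (S - (X - {a}))"
    proof -
      fix S
      have "Q S = Q (S - X)" by (rule insert.prems(2))
      also have "\<dots> = Q (insert a (S - X))" using q1 by simp
      also have "insert a (S - X) = insert a (S - (X - {a}))" by auto
      also have "Q \<dots> = Q (S - (X - {a}))" using q1 by simp
      finally show "Q S = Q (S - (X - {a}))" .
    qed
    ultimately have ih: "meas p U (\<lambda>S. X - {a} \<subseteq> S \<and> Q S) = p ^ card (X - {a}) * meas p U Q"
      using insert.IH by blast
    have cX: "card X = Suc (card (X - {a}))"
      using True insert by (metis card_Suc_Diff1 finite_insert finite_subset)
    have "meas p (insert a U) (\<lambda>S. X \<subseteq> S \<and> Q S) = p * meas p U (\<lambda>S. X \<subseteq> insert a S \<and> Q (insert a S))"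
      using insert z by (simp add: meas_insert)
    also have "(\<lambda>S. X \<subseteq> insert a S \<and> Q (insert a S)) = (\<lambda>S. X - {a} \<subseteq> S \<and> Q S)"
      using q1 by (auto simp: fun_eq_iff)
    also have "meas p (insert a U) Q = meas p U Q"
      using insert by (simp add: meas_insert q1 algebra_simps)
    ultimately show ?thesis using ih cX by simp
  next
    case False
    then have XU: "X \<subseteq> U" using insert by auto
    have q1: "\<And>S. Q (insert a S) = Q (insert a S - X)" using insert.prems(2) by blast
    have q1': "\<And>S. Q (insert a S) = Q (insert a (S - X))"
      using q1 False by (metis insert_Diff_if)
    have "meas p (insert a U) (\<lambda>S. X \<subseteq> S \<and> Q S) =
      (1 - p) * meas p U (\<lambda>S. X \<subseteq> S \<and> Q S) + p * meas p U (\<lambda>S. X \<subseteq> S \<and> Q (insert a S))"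
      using insert False by (simp add: meas_insert subset_insert)
    also have "\<dots> = (1 - p) * (p ^ card X * meas p U Q) + p * (p ^ card X * meas p U (\<lambda>S. Q (insert a S)))"
      using insert.IH[of X Q, OF XU insert.prems(2)] insert.IH[of X "\<lambda>S. Q (insert a S)", OF XU q1'] by simp
    also have "\<dots> = p ^ card X * meas p (insert a U) Q"
      using insert by (simp add: meas_insert algebra_simps)
    finally show ?thesis .
  qed
qed

lemma meas_cong: "(\<And>S. S \<subseteq> U \<Longrightarrow> P S = Q S) \<Longrightarrow> meas p U P = meas p U Q"
  unfolding meas_def by (rule sum.cong) auto

lemma meas_subset_event:
  assumes "finite U" "X \<subseteq> U"
  shows "meas p U (\<lambda>S. X \<subseteq> S) = p ^ card X"
  using meas_indep[OF assms, of "\<lambda>_. True" p] meas_True[OF assms(1)] by simp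

lemma janson:
  assumes U: "finite U" and I: "finite I" and AU: "\<And>i. i \<in> I \<Longrightarrow> A i \<subseteq> U" and p: "0 \<le> p" "p \<le> 1"
  shows "meas p U (\<lambda>S. \<forall>i\<in>I. \<not> A i \<subseteq> S) \<le>
    exp (- (\<Sum>i\<in>I. p ^ card (A i)) + (\<Sum>i\<in>I. \<Sum>j\<in>{j\<in>I. j \<noteq> i \<and> A i \<inter> A j \<noteq> {}}. p ^ card (A i \<union> A j)))"
  using I AU
proof (induction I rule: finite_induct)
  case empty
  then show ?case using meas_True[OF U] by simp
next
  case (insert i I)
  define C where "C = (\<lambda>S. \<forall>j\<in>I. \<not> A j \<subseteq> S)"
  define J1 where "J1 = {j\<in>I. A i \<inter> A j \<noteq> {}}"
  define J0 where "J0 = {j\<in>I. A i \<inter> A j = {}}"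
  define E where "E = (\<lambda>S. \<forall>j\<in>J0. \<not> A j \<subseteq> S)"
  define \<sigma> where "\<sigma> = (\<Sum>j\<in>J1. p ^ card (A i \<union> A j))"
  define pi where "pi = p ^ card (A i)"
  define \<mu> where "\<mu> = (\<Sum>i\<in>I. p ^ card (A i))"
  define \<Delta> where "\<Delta> = (\<Sum>i\<in>I. \<Sum>j\<in>{j\<in>I. j \<noteq> i \<and> A i \<inter> A j \<noteq> {}}. p ^ card (A i \<union> A j))"
  have Ai: "A i \<subseteq> U" using insert by auto
  have finJ1: "finite J1" using insert by (simp add: J1_def)
  have IH: "meas p U C \<le> exp (- \<mu> + \<Delta>)" using insert by (simp add: C_def \<mu>_def \<Delta>_def)
  have mC0: "0 \<le> meas p U C" using p by (rule meas_nonneg)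
  have e1: "meas p U (\<lambda>S. \<forall>j\<in>insert i I. \<not> A j \<subseteq> S) = meas p U C - meas p U (\<lambda>S. C S \<and> A i \<subseteq> S)"
  proof -
    have "meas p U C = meas p U (\<lambda>S. C S \<and> A i \<subseteq> S) + meas p U (\<lambda>S. C S \<and> \<not> A i \<subseteq> S)"
      by (rule meas_split[OF U])
    moreover have "(\<lambda>S. \<forall>j\<in>insert i I. \<not> A j \<subseteq> S) = (\<lambda>S. C S \<and> \<not> A i \<subseteq> S)"
      by (auto simp: C_def)
    ultimately show ?thesis by simp
  qed
  have indE: "meas p U (\<lambda>S. A i \<subseteq> S \<and> E S) = pi * meas p U E"
    unfolding pi_def
  proof (rule meas_indep[OF U Ai])
    fix S
    show "E S = E (S - A i)" unfolding E_def J0_def by blast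
  qed
  have antiE: "antimono E" unfolding E_def by (rule antimonoI) auto
  have split2: "meas p U (\<lambda>S. A i \<subseteq> S \<and> E S) =
      meas p U (\<lambda>S. (A i \<subseteq> S \<and> E S) \<and> (\<exists>j\<in>J1. A j \<subseteq> S)) + meas p U (\<lambda>S. C S \<and> A i \<subseteq> S)"
  proof -
    have "meas p U (\<lambda>S. A i \<subseteq> S \<and> E S) =
      meas p U (\<lambda>S. (A i \<subseteq> S \<and> E S) \<and> (\<exists>j\<in>J1. A j \<subseteq> S)) + meas p U (\<lambda>S. (A i \<subseteq> S \<and> E S) \<and> \<not>(\<exists>j\<in>J1. A j \<subseteq> S))"
      by (rule meas_split[OF U])
    moreover have "(\<lambda>S. (A i \<subseteq> S \<and> E S) \<and> \<not>(\<exists>j\<in>J1. A j \<subseteq> S)) = (\<lambda>S. C S \<and> A i \<subseteq> S)"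
      unfolding C_def E_def J0_def J1_def by (auto simp: fun_eq_iff)
    ultimately show ?thesis by simp
  qed
  have ub: "meas p U (\<lambda>S. (A i \<subseteq> S \<and> E S) \<and> (\<exists>j\<in>J1. A j \<subseteq> S)) \<le> \<sigma> * meas p U E"
  proof -
    have "meas p U (\<lambda>S. (A i \<subseteq> S \<and> E S) \<and> (\<exists>j\<in>J1. A j \<subseteq> S)) \<le> (\<Sum>j\<in>J1. meas p U (\<lambda>S. (A i \<subseteq> S \<and> E S) \<and> A j \<subseteq> S))"
      by (rule meas_union_bound[OF U finJ1 p])
    also have "\<dots> \<le> (\<Sum>j\<in>J1. p ^ card (A i \<union> A j) * meas p U E)"
    proof (rule sum_mono)
      fix j assume j: "j \<in> J1"
      then have Aj: "A j \<subseteq> U" using insert by (auto simp: J1_def)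
      have "meas p U (\<lambda>S. (A i \<subseteq> S \<and> E S) \<and> A j \<subseteq> S) = meas p U (\<lambda>S. A i \<union> A j \<subseteq> S \<and> E S)"
        by (rule meas_cong) auto
      also have "\<dots> \<le> meas p U (\<lambda>S. A i \<union> A j \<subseteq> S) * meas p U E"
        by (rule harris[OF U p _ antiE]) (rule monoI, auto)
      also have "meas p U (\<lambda>S. A i \<union> A j \<subseteq> S) = p ^ card (A i \<union> A j)"
        by (rule meas_subset_event[OF U]) (use Ai Aj in auto)
      finally show "meas p U (\<lambda>S. (A i \<subseteq> S \<and> E S) \<and> A j \<subseteq> S) \<le> p ^ card (A i \<union> A j) * meas p U E" .
    qed
    also have "\<dots> = \<sigma> * meas p U E" by (simp add: \<sigma>_def sum_distrib_right)
    finally show ?thesis .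
  qed
  have CE: "meas p U C \<le> meas p U E"
    by (rule meas_mono[OF U p]) (auto simp: C_def E_def J0_def)
  have key: "meas p U C * (pi - \<sigma>) \<le> meas p U (\<lambda>S. C S \<and> A i \<subseteq> S)"
  proof (cases "pi - \<sigma> \<ge> 0")
    case True
    have "meas p U C * (pi - \<sigma>) \<le> meas p U E * (pi - \<sigma>)" using CE True by (rule mult_right_mono)
    also have "\<dots> \<le> meas p U (\<lambda>S. C S \<and> A i \<subseteq> S)" using split2 ub indE by (simp add: algebra_simps)
    finally show ?thesis .
  next
    case False
    then have "meas p U C * (pi - \<sigma>) \<le> 0" using mC0 by (simp add: mult_nonneg_nonpos)
    also have "0 \<le> meas p U (\<lambda>S. C S \<and> A i \<subseteq> S)" using p by (rule meas_nonneg)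
    finally show ?thesis .
  qed
  have "meas p U (\<lambda>S. \<forall>j\<in>insert i I. \<not> A j \<subseteq> S) \<le> meas p U C * (1 + (- pi + \<sigma>))"
    using e1 key by (simp add: algebra_simps)
  also have "\<dots> \<le> meas p U C * exp (- pi + \<sigma>)"
    using mC0 by (intro mult_left_mono) auto
  also have "\<dots> \<le> exp (- \<mu> + \<Delta>) * exp (- pi + \<sigma>)"
    using IH by (intro mult_right_mono) auto
  also have "\<dots> = exp (- (\<mu> + pi) + (\<Delta> + \<sigma>))" by (simp add: exp_add[symmetric])
  also have "\<dots> \<le> exp (- (\<Sum>i\<in>insert i I. p ^ card (A i)) + (\<Sum>k\<in>insert i I. \<Sum>j\<in>{j\<in>insert i I. j \<noteq> k \<and> A k \<inter> A j \<noteq> {}}. p ^ card (A k \<union> A j)))"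
  proof -
    have m: "(\<Sum>i\<in>insert i I. p ^ card (A i)) = \<mu> + pi" using insert by (simp add: \<mu>_def pi_def)
    have d1: "{j\<in>insert i I. j \<noteq> i \<and> A i \<inter> A j \<noteq> {}} = J1" using insert by (auto simp: J1_def)
    have d2: "\<Delta> \<le> (\<Sum>k\<in>I. \<Sum>j\<in>{j\<in>insert i I. j \<noteq> k \<and> A k \<inter> A j \<noteq> {}}. p ^ card (A k \<union> A j))"
      unfolding \<Delta>_def
    proof (rule sum_mono)
      fix k assume "k \<in> I"
      show "(\<Sum>j\<in>{j\<in>I. j \<noteq> k \<and> A k \<inter> A j \<noteq> {}}. p ^ card (A k \<union> A j)) \<le> (\<Sum>j\<in>{j\<in>insert i I. j \<noteq> k \<and> A k \<inter> A j \<noteq> {}}. p ^ card (A k \<union> A j))"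
        by (rule sum_mono2) (use insert p in auto)
    qed
    have "(\<Sum>k\<in>insert i I. \<Sum>j\<in>{j\<in>insert i I. j \<noteq> k \<and> A k \<inter> A j \<noteq> {}}. p ^ card (A k \<union> A j))
        = \<sigma> + (\<Sum>k\<in>I. \<Sum>j\<in>{j\<in>insert i I. j \<noteq> k \<and> A k \<inter> A j \<noteq> {}}. p ^ card (A k \<union> A j))"
      using insert d1 by (simp add: \<sigma>_def)
    then show ?thesis using m d2 by simp
  qed
  finally show ?case .
qed

lemma prob_eq_meas:
  assumes A: "finite A" and p: "0 \<le> p" "p \<le> 1"
  shows "measure_pmf.prob (Pi_pmf A False (\<lambda>_. bernoulli_pmf p)) {f. P {x \<in> A. f x}} = meas p A P"
proof -
  define M where "M = Pi_pmf A False (\<lambda>_. bernoulli_pmf p)"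
  define F where "F = {f :: 'a \<Rightarrow> bool. \<forall>x. x \<notin> A \<longrightarrow> f x = False}"
  define E where "E = {f. P {x \<in> A. f x}}"
  define g where "g = (\<lambda>S :: 'a set. \<lambda>x. x \<in> S)"
  have sF: "set_pmf M \<subseteq> F" unfolding M_def F_def by (rule set_Pi_pmf_subset[OF A])
  have EF: "E \<inter> F = g ` {S. S \<subseteq> A \<and> P S}"
  proof (intro equalityI subsetI)
    fix f assume "f \<in> E \<inter> F"
    then have "f = g {x \<in> A. f x}" "{x \<in> A. f x} \<in> {S. S \<subseteq> A \<and> P S}"
      by (auto simp: E_def F_def g_def fun_eq_iff)
    then show "f \<in> g ` {S. S \<subseteq> A \<and> P S}" by blast
  next
    fix f assume "f \<in> g ` {S. S \<subseteq> A \<and> P S}"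
    then obtain S where "S \<subseteq> A" "P S" "f = g S" by auto
    moreover have "{x \<in> A. x \<in> S} = S" using \<open>S \<subseteq> A\<close> by auto
    ultimately show "f \<in> E \<inter> F" by (auto simp: E_def F_def g_def)
  qed
  have inj: "inj_on g {S. S \<subseteq> A \<and> P S}" by (auto simp: inj_on_def g_def fun_eq_iff)
  have fin: "finite {S. S \<subseteq> A \<and> P S}" using A by (auto intro: finite_subset[of _ "Pow A"])
  have "measure_pmf.prob M E = measure_pmf.prob M (E \<inter> F)"
  proof -
    have "measure_pmf.prob M (E \<inter> F) = measure_pmf.prob M ((E \<inter> F) \<inter> set_pmf M)"
      by (rule measure_Int_set_pmf[symmetric])
    also have "(E \<inter> F) \<inter> set_pmf M = E \<inter> set_pmf M" using sF by auto
    also have "measure_pmf.prob M \<dots> = measure_pmf.prob M E" by (rule measure_Int_set_pmf)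
    finally show ?thesis by simp
  qed
  also have "\<dots> = sum (pmf M) (E \<inter> F)"
    by (rule measure_measure_pmf_finite) (simp add: EF fin)
  also have "\<dots> = (\<Sum>S\<in>{S. S \<subseteq> A \<and> P S}. pmf M (g S))"
    unfolding EF by (rule sum.reindex[OF inj, unfolded comp_def])
  also have "\<dots> = meas p A P" unfolding meas_def
  proof (rule sum.cong)
    fix S assume "S \<in> {S. S \<subseteq> A \<and> P S}"
    then have SA: "S \<subseteq> A" by auto
    have "pmf M (g S) = (\<Prod>x\<in>A. (if x \<in> S then p else 1 - p))"
      unfolding M_def using SA p by (subst pmf_Pi[OF A]) (auto simp: g_def intro!: prod.cong)
    also have "\<dots> = prod (\<lambda>_. p) (A \<inter> {x. x \<in> S}) * prod (\<lambda>_. 1 - p) (A \<inter> - {x. x \<in> S})"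
      by (rule prod.If_cases[OF A])
    also have "A \<inter> {x. x \<in> S} = S" using SA by auto
    also have "A \<inter> - {x. x \<in> S} = A - S" by auto
    finally show "pmf M (g S) = p ^ card S * (1 - p) ^ card (A - S)" by simp
  qed simp
  finally show ?thesis by (simp add: M_def E_def)
qed

definition prodl :: "('a, 'b) monoid_scheme \<Rightarrow> 'a list \<Rightarrow> 'a" where
  "prodl G xs = foldr (\<lambda>x y. x \<otimes>\<^bsub>G\<^esub> y) xs \<one>\<^bsub>G\<^esub>"

lemma prodl_Nil [simp]: "prodl G [] = \<one>\<^bsub>G\<^esub>" by (simp add: prodl_def)
lemma prodl_Cons [simp]: "prodl G (x # xs) = x \<otimes>\<^bsub>G\<^esub> prodl G xs" by (simp add: prodl_def)


lemma card_lists_pos: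
  assumes "\<And>i. i < d \<Longrightarrow> finite (F i)"
  shows "finite {ys. length ys = d \<and> (\<forall>i<d. ys ! i \<in> F i)} \<and>
         card {ys. length ys = d \<and> (\<forall>i<d. ys ! i \<in> F i)} = (\<Prod>i<d. card (F i))"
  using assms
proof (induction d arbitrary: F)
  case 0
  have "{ys. length ys = 0 \<and> (\<forall>i<0. ys ! i \<in> F i)} = {[]}" by auto
  then show ?case by simp
next
  case (Suc d)
  let ?R = "{ys. length ys = d \<and> (\<forall>i<d. ys ! i \<in> F (Suc i))}"
  have ih: "finite ?R \<and> card ?R = (\<Prod>i<d. card (F (Suc i)))" using Suc by auto
  have eq: "{ys. length ys = Suc d \<and> (\<forall>i<Suc d. ys ! i \<in> F i)} = (\<lambda>(x, ys). x # ys) ` (F 0 \<times> ?R)"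
  proof (intro equalityI subsetI)
    fix ys assume a: "ys \<in> {ys. length ys = Suc d \<and> (\<forall>i<Suc d. ys ! i \<in> F i)}"
    then obtain x zs where ys: "ys = x # zs" by (cases ys) auto
    have "x \<in> F 0" using a ys by force
    moreover have "zs \<in> ?R" using a ys by force
    ultimately show "ys \<in> (\<lambda>(x, ys). x # ys) ` (F 0 \<times> ?R)" using ys by force
  next
    fix ys assume "ys \<in> (\<lambda>(x, ys). x # ys) ` (F 0 \<times> ?R)"
    then show "ys \<in> {ys. length ys = Suc d \<and> (\<forall>i<Suc d. ys ! i \<in> F i)}"
      by (auto simp: less_Suc_eq_0_disj)
  qed
  have inj: "inj_on (\<lambda>(x, ys). x # ys) (F 0 \<times> ?R)" by (auto simp: inj_on_def)
  have f0: "finite (F 0)" using Suc by auto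
  have ps: "(\<Prod>i<Suc d. card (F i)) = card (F 0) * (\<Prod>i<d. card (F (Suc i)))"
    by (rule prod.lessThan_Suc_shift)
  show ?case unfolding eq ps
    using ih f0 by (simp add: card_image[OF inj] card_cartesian_product)
qed

lemma card_mask_le:
  assumes T: "\<And>xs. xs \<in> T \<Longrightarrow> length xs = d"
    and det: "\<And>xs ys. xs \<in> T \<Longrightarrow> ys \<in> T \<Longrightarrow> (\<forall>i<d. i \<notin> Z \<longrightarrow> xs ! i = ys ! i) \<Longrightarrow> xs = ys"
    and val: "\<And>xs i. xs \<in> T \<Longrightarrow> i < d \<Longrightarrow> i \<notin> Z \<Longrightarrow> xs ! i \<in> F i"
    and fin: "\<And>i. finite (F i)"
  shows "card T \<le> (\<Prod>i<d. if i \<in> Z then 1 else card (F i))"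
proof -
  define c where "c = (undefined :: 'a)"
  define m where "m = (\<lambda>xs. map (\<lambda>i. if i \<in> Z then c else xs ! i) [0..<d])"
  define F' where "F' = (\<lambda>i. if i \<in> Z then {c} else F i)"
  have inj: "inj_on m T"
  proof (rule inj_onI)
    fix xs ys assume "xs \<in> T" "ys \<in> T" "m xs = m ys"
    have mi: "\<And>xs i. i < d \<Longrightarrow> m xs ! i = (if i \<in> Z then c else xs ! i)" by (simp add: m_def)
    have "\<forall>i<d. i \<notin> Z \<longrightarrow> xs ! i = ys ! i"
    proof (intro allI impI)
      fix i assume "i < d" "i \<notin> Z"
      then show "xs ! i = ys ! i" using mi[of i xs] mi[of i ys] \<open>m xs = m ys\<close> by simp
    qed
    then show "xs = ys" using det \<open>xs \<in> T\<close> \<open>ys \<in> T\<close> by blast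
  qed
  have sub: "m ` T \<subseteq> {ys. length ys = d \<and> (\<forall>i<d. ys ! i \<in> F' i)}"
    using val by (auto simp: m_def F'_def)
  have cl: "finite {ys. length ys = d \<and> (\<forall>i<d. ys ! i \<in> F' i)} \<and>
    card {ys. length ys = d \<and> (\<forall>i<d. ys ! i \<in> F' i)} = (\<Prod>i<d. card (F' i))"
    by (rule card_lists_pos) (simp add: F'_def fin)
  have "card T \<le> card {ys. length ys = d \<and> (\<forall>i<d. ys ! i \<in> F' i)}"
    using card_inj_on_le[OF inj sub] cl by simp
  also have "\<dots> = (\<Prod>i<d. card (F' i))" using cl by simp
  also have "\<dots> = (\<Prod>i<d. if i \<in> Z then 1 else card (F i))"
    by (rule prod.cong) (auto simp: F'_def)
  finally show ?thesis .
qed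

lemma prod_if_const:
  assumes "Z \<subseteq> {..<d}"
  shows "(\<Prod>i<d. if i \<in> Z then 1 else (N::nat)) = N ^ (d - card Z)"
proof -
  have "(\<Prod>i<d. if i \<in> Z then 1 else N) = (\<Prod>i\<in>{..<d} \<inter> {i. i \<in> Z}. 1) * (\<Prod>i\<in>{..<d} \<inter> - {i. i \<in> Z}. N)"
    by (rule prod.If_cases) simp
  also have "\<dots> = N ^ card ({..<d} - Z)" by (simp add: Diff_eq)
  also have "card ({..<d} - Z) = d - card Z" using assms by (simp add: card_Diff_subset finite_subset)
  finally show ?thesis .
qed

lemma prod_if_const2:
  fixes P :: "nat set" and q :: nat
  assumes "P \<subseteq> {..<d}" "q < d" "q \<notin> P"
  shows "(\<Prod>i<d. if i \<in> {q} then 1 else if i \<in> P then (a::nat) else N) = a ^ card P * N ^ (d - 1 - card P)"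
proof -
  have fP: "finite P" using assms(1) finite_subset by blast
  have "(\<Prod>i<d. if i \<in> {q} then 1 else if i \<in> P then a else N) = (\<Prod>i\<in>{..<d} \<inter> {i. i \<in> {q}}. 1) * (\<Prod>i\<in>{..<d} \<inter> - {i. i \<in> {q}}. if i \<in> P then a else N)"
    by (rule prod.If_cases) simp
  also have "\<dots> = (\<Prod>i\<in>{..<d} - {q}. if i \<in> P then a else N)" by (simp add: Diff_eq)
  also have "\<dots> = (\<Prod>i\<in>({..<d} - {q}) \<inter> {i. i \<in> P}. a) * (\<Prod>i\<in>({..<d} - {q}) \<inter> - {i. i \<in> P}. N)"
    by (rule prod.If_cases) simp
  finally have e: "(\<Prod>i<d. if i \<in> {q} then 1 else if i \<in> P then a else N) =
     a ^ card (({..<d} - {q}) \<inter> {i. i \<in> P}) * N ^ card (({..<d} - {q}) \<inter> - {i. i \<in> P})" by simp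
  have e1: "({..<d} - {q}) \<inter> {i. i \<in> P} = P" using assms by auto
  have e2: "({..<d} - {q}) \<inter> - {i. i \<in> P} = {..<d} - ({q} \<union> P)" by auto
  have e3: "card ({..<d} - ({q} \<union> P)) = d - 1 - card P"
    using assms fP by (subst card_Diff_subset) auto
  show ?thesis using e e1 e2 e3 by simp
qed

context group
begin

lemma prodl_closed: "set xs \<subseteq> carrier G \<Longrightarrow> prodl G xs \<in> carrier G"
  by (induction xs) auto

lemma prodl_append: "set xs \<subseteq> carrier G \<Longrightarrow> set ys \<subseteq> carrier G \<Longrightarrow> prodl G (xs @ ys) = prodl G xs \<otimes> prodl G ys"
  by (induction xs) (auto simp: m_assoc prodl_closed)

lemma walk:
  assumes "set t \<subseteq> S" "set t \<subseteq> carrier G" "\<one> \<notin> set t" "a \<in> carrier G"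
  shows "(cayley_adj G S ^^ length t) a (a \<otimes> prodl G t)"
  using assms
proof (induction t arbitrary: a)
  case Nil
  then show ?case by simp
next
  case (Cons x t)
  have x: "x \<in> carrier G" "x \<in> S" "x \<noteq> \<one>" using Cons.prems by auto
  have "cayley_adj G S a (a \<otimes> x)"
    unfolding cayley_adj_def
  proof (intro conjI)
    show "a \<noteq> a \<otimes> x"
    proof
      assume "a = a \<otimes> x"
      then have "a \<otimes> \<one> = a \<otimes> x" using Cons.prems by simp
      then have "\<one> = x" using Cons.prems x by simp
      then show False using x by simp
    qed
    show "inv a \<otimes> (a \<otimes> x) \<in> S \<or> inv (a \<otimes> x) \<otimes> a \<in> S"
      using x Cons.prems by (simp add: m_assoc[symmetric])
  qed (use x Cons.prems in auto)
  moreover have "(cayley_adj G S ^^ length t) (a \<otimes> x) ((a \<otimes> x) \<otimes> prodl G t)"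
    using Cons by auto
  ultimately have "(cayley_adj G S ^^ Suc (length t)) a ((a \<otimes> x) \<otimes> prodl G t)"
    by (rule relpowp_Suc_I2)
  then show ?case using x Cons.prems by (simp add: m_assoc prodl_closed)
qed

lemma adj_translate:
  assumes "(cayley_adj G S ^^ n) x y" "g \<in> carrier G"
  shows "(cayley_adj G S ^^ n) (g \<otimes> x) (g \<otimes> y)"
  using assms
proof (induction n arbitrary: x)
  case 0
  then show ?case by simp
next
  case (Suc n)
  obtain z where z: "cayley_adj G S x z" "(cayley_adj G S ^^ n) z y"
    using Suc.prems(1) by (blast dest: relpowp_Suc_D2)
  have xz: "x \<in> carrier G" "z \<in> carrier G" "x \<noteq> z" using z(1) by (auto simp: cayley_adj_def)
  have "cayley_adj G S (g \<otimes> x) (g \<otimes> z)"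
  proof -
    have i1: "inv (g \<otimes> x) \<otimes> (g \<otimes> z) = inv x \<otimes> z"
      using xz Suc.prems by (simp add: inv_mult_group m_assoc[symmetric]) (simp add: m_assoc)
    have i2: "inv (g \<otimes> z) \<otimes> (g \<otimes> x) = inv z \<otimes> x"
      using xz Suc.prems by (simp add: inv_mult_group m_assoc[symmetric]) (simp add: m_assoc)
    have "g \<otimes> x \<noteq> g \<otimes> z" using xz Suc.prems by simp
    then show ?thesis using z(1) xz Suc.prems i1 i2 by (auto simp: cayley_adj_def)
  qed
  moreover have "(cayley_adj G S ^^ n) (g \<otimes> z) (g \<otimes> y)" using Suc z by auto
  ultimately show ?case by (rule relpowp_Suc_I2)
qed

lemma dist_le: "(cayley_adj G S ^^ n) a b \<Longrightarrow> cayley_dist G S a b \<le> enat n"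
  unfolding cayley_dist_def by (rule INF_lower2[of n]) auto

lemma diam_le:
  assumes "\<And>k. k \<in> carrier G \<Longrightarrow> k \<noteq> \<one> \<Longrightarrow> \<exists>n\<le>d. (cayley_adj G S ^^ n) \<one> k"
  shows "cayley_diam G S \<le> enat d"
  unfolding cayley_diam_def
proof (intro SUP_least)
  fix g h assume g: "g \<in> carrier G" and h: "h \<in> carrier G"
  show "cayley_dist G S g h \<le> enat d"
  proof (cases "inv g \<otimes> h = \<one>")
    case True
    then have "h = g" using g h by (metis inv_equality l_inv_ex  inv_inv inv_closed)
    then have "(cayley_adj G S ^^ 0) g h" by simp
    then have "cayley_dist G S g h \<le> enat 0" by (rule dist_le)
    then show ?thesis by (meson enat_ord_simps(1) order_trans zero_le)
  next
    case False
    obtain n where n: "n \<le> d" "(cayley_adj G S ^^ n) \<one> (inv g \<otimes> h)"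
      using assms[of "inv g \<otimes> h"] False g h by auto
    have "(cayley_adj G S ^^ n) (g \<otimes> \<one>) (g \<otimes> (inv g \<otimes> h))" by (rule adj_translate[OF n(2) g])
    then have "(cayley_adj G S ^^ n) g h" using g h by (simp add: m_assoc[symmetric])
    then have "cayley_dist G S g h \<le> enat n" by (rule dist_le)
    then show ?thesis using n(1) by (meson enat_ord_simps(1) order_trans)
  qed
qed

definition allt :: "nat \<Rightarrow> 'a \<Rightarrow> 'a list set" where
  "allt d k = {t. length t = d \<and> set t \<subseteq> carrier G \<and> prodl G t = k}"

lemma det:
  assumes "xs \<in> allt d k" "ys \<in> allt d k" "q < d" "\<forall>i<d. i \<noteq> q \<longrightarrow> xs ! i = ys ! i"
  shows "xs = ys"
proof -
  have l: "length xs = d" "length ys = d" using assms by (auto simp: allt_def)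
  have c: "set xs \<subseteq> carrier G" "set ys \<subseteq> carrier G" using assms by (auto simp: allt_def)
  have t: "take q xs = take q ys" using assms l by (intro nth_equalityI) auto
  have dr: "drop (Suc q) xs = drop (Suc q) ys" using assms l by (intro nth_equalityI) auto
  have xs: "xs = take q xs @ xs ! q # drop (Suc q) xs" using assms l by (simp add: id_take_nth_drop)
  have ys: "ys = take q ys @ ys ! q # drop (Suc q) ys" using assms l by (simp add: id_take_nth_drop)
  have ct: "set (take q xs) \<subseteq> carrier G" "set (drop (Suc q) xs) \<subseteq> carrier G"
    using c by (auto dest: in_set_takeD in_set_dropD)
  have cq: "xs ! q \<in> carrier G" "ys ! q \<in> carrier G" using c l assms(3) by auto
  have "prodl G xs = prodl G (take q xs) \<otimes> (xs ! q \<otimes> prodl G (drop (Suc q) xs))"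
    using ct cq by (subst xs) (simp add: prodl_append)
  moreover have "prodl G ys = prodl G (take q xs) \<otimes> (ys ! q \<otimes> prodl G (drop (Suc q) xs))"
    using ct cq by (subst ys) (simp add: prodl_append t dr)
  moreover have "prodl G xs = prodl G ys" using assms by (simp add: allt_def)
  ultimately have "xs ! q = ys ! q" using ct cq by (simp add: prodl_closed)
  then have "\<forall>i<d. xs ! i = ys ! i"
  proof (intro allI impI)
    fix i assume "i < d"
    show "xs ! i = ys ! i" using assms(4) \<open>xs ! q = ys ! q\<close> \<open>i < d\<close> by (cases "i = q") auto
  qed
  then show ?thesis using l by (intro nth_equalityI) auto
qed

lemma allt_finite: "finite (carrier G) \<Longrightarrow> finite (allt d k)"
  by (rule finite_subset[of _ "{xs. set xs \<subseteq> carrier G \<and> length xs = d}"])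
     (auto simp: allt_def finite_lists_length_eq)

lemma allt_upper:
  assumes "finite (carrier G)" "d \<ge> 1"
  shows "card (allt d k) \<le> card (carrier G) ^ (d - 1)"
proof -
  have "card (allt d k) \<le> (\<Prod>i<d. if i \<in> {d - 1} then 1 else card (carrier G))"
    by (rule card_mask_le[where F="\<lambda>_. carrier G"])
       (use assms in \<open>auto simp: allt_def intro: det[of _ d k _ "d - 1"]\<close>)
  also have "\<dots> = card (carrier G) ^ (d - 1)" using assms by (subst prod_if_const) auto
  finally show ?thesis .
qed

lemma allt_lower:
  assumes "finite (carrier G)" "d \<ge> 1" "k \<in> carrier G"
  shows "card (carrier G) ^ (d - 1) \<le> card (allt d k)"
proof -
  define f where "f = (\<lambda>ys. ys @ [inv (prodl G ys) \<otimes> k])"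
  have "card (carrier G) ^ (d - 1) = card {ys. set ys \<subseteq> carrier G \<and> length ys = d - 1}"
    using assms by (simp add: card_lists_length_eq)
  also have "\<dots> \<le> card (allt d k)"
  proof (rule card_inj_on_le)
    show "inj_on f {ys. set ys \<subseteq> carrier G \<and> length ys = d - 1}"
      by (auto simp: inj_on_def f_def)
    show "f ` {ys. set ys \<subseteq> carrier G \<and> length ys = d - 1} \<subseteq> allt d k"
    proof
      fix xs assume "xs \<in> f ` {ys. set ys \<subseteq> carrier G \<and> length ys = d - 1}"
      then obtain ys where ys: "set ys \<subseteq> carrier G" "length ys = d - 1" "xs = f ys" by auto
      have pc: "prodl G ys \<in> carrier G" using ys by (simp add: prodl_closed)
      have "prodl G xs = prodl G ys \<otimes> (inv (prodl G ys) \<otimes> k)"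
        using ys pc assms by (simp add: f_def prodl_append)
      also have "\<dots> = k" using pc assms by (simp add: m_assoc[symmetric])
      finally show "xs \<in> allt d k" using ys pc assms by (auto simp: allt_def f_def)
    qed
    show "finite (allt d k)" using assms(1) by (rule allt_finite)
  qed
  finally show ?thesis .
qed

lemma bad1:
  assumes "finite (carrier G)" "d \<ge> 2" "i < d"
  shows "card {xs \<in> allt d k. xs ! i = \<one>} \<le> card (carrier G) ^ (d - 2)"
proof -
  define q where "q = (if i = 0 then 1 else (0::nat))"
  have q: "q < d" "q \<noteq> i" using assms by (auto simp: q_def)
  have "card {xs \<in> allt d k. xs ! i = \<one>} \<le> (\<Prod>j<d. if j \<in> {q, i} then 1 else card (carrier G))"
  proof (rule card_mask_le[where F="\<lambda>_. carrier G"])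
    fix xs ys assume a: "xs \<in> {xs \<in> allt d k. xs ! i = \<one>}" "ys \<in> {xs \<in> allt d k. xs ! i = \<one>}"
      "\<forall>j<d. j \<notin> {q, i} \<longrightarrow> xs ! j = ys ! j"
    then have "\<forall>j<d. j \<noteq> q \<longrightarrow> xs ! j = ys ! j" by auto
    then show "xs = ys" using a q by (intro det[of xs d k ys q]) auto
  qed (use assms in \<open>auto simp: allt_def\<close>)
  also have "\<dots> = card (carrier G) ^ (d - 2)"
    using q assms by (subst prod_if_const) (auto simp: numeral_2_eq_2)
  finally show ?thesis .
qed

lemma bad2:
  assumes "finite (carrier G)" "d \<ge> 3" "i < j" "j < d"
  shows "card {xs \<in> allt d k. xs ! i = xs ! j} \<le> card (carrier G) ^ (d - 2)"
proof -
  define q where "q = (if i \<noteq> 0 then 0 else if j \<noteq> 1 then 1 else (2::nat))"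
  have q: "q < d" "q \<noteq> i" "q \<noteq> j" using assms by (auto simp: q_def)
  have "card {xs \<in> allt d k. xs ! i = xs ! j} \<le> (\<Prod>l<d. if l \<in> {q, j} then 1 else card (carrier G))"
  proof (rule card_mask_le[where F="\<lambda>_. carrier G"])
    fix xs ys assume a: "xs \<in> {xs \<in> allt d k. xs ! i = xs ! j}" "ys \<in> {xs \<in> allt d k. xs ! i = xs ! j}"
      "\<forall>l<d. l \<notin> {q, j} \<longrightarrow> xs ! l = ys ! l"
    then have "xs ! j = ys ! j" using q assms by auto
    then have "\<forall>l<d. l \<noteq> q \<longrightarrow> xs ! l = ys ! l" using a by auto
    then show "xs = ys" using a q by (intro det[of xs d k ys q]) auto
  qed (use assms in \<open>auto simp: allt_def\<close>)
  also have "\<dots> = card (carrier G) ^ (d - 2)"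
    using q assms by (subst prod_if_const) (auto simp: numeral_2_eq_2)
  finally show ?thesis .
qed

lemma bad2_d2:
  assumes "finite (carrier G)"
  shows "card {xs \<in> allt 2 k. xs ! 0 = xs ! 1} \<le> card {x \<in> carrier G. x \<otimes> x = k}"
proof (rule card_inj_on_le[where f="\<lambda>xs. xs ! 0"])
  show "inj_on (\<lambda>xs. xs ! 0) {xs \<in> allt 2 k. xs ! 0 = xs ! 1}"
  proof (rule inj_onI)
    fix xs ys assume "xs \<in> {xs \<in> allt 2 k. xs ! 0 = xs ! 1}" "ys \<in> {xs \<in> allt 2 k. xs ! 0 = xs ! 1}" "xs ! 0 = ys ! 0"
    then show "xs = ys" by (intro nth_equalityI) (auto simp: allt_def less_2_cases_iff)
  qed
  show "(\<lambda>xs. xs ! 0) ` {xs \<in> allt 2 k. xs ! 0 = xs ! 1} \<subseteq> {x \<in> carrier G. x \<otimes> x = k}"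
  proof
    fix x assume "x \<in> (\<lambda>xs. xs ! 0) ` {xs \<in> allt 2 k. xs ! 0 = xs ! 1}"
    then obtain xs where xs: "xs \<in> allt 2 k" "xs ! 0 = xs ! 1" "x = xs ! 0" by auto
    then obtain a b where "xs = [a, b]" by (auto simp: allt_def numeral_2_eq_2 length_Suc_conv)
    then show "x \<in> {x \<in> carrier G. x \<otimes> x = k}" using xs by (auto simp: allt_def)
  qed
  show "finite {x \<in> carrier G. x \<otimes> x = k}" using assms by auto
qed

lemma posP:
  assumes "finite (carrier G)" "P \<subseteq> {..<d}" "card P < d" "finite T0" "card T0 = d"
  shows "card {xs \<in> allt d k. \<forall>i\<in>P. xs ! i \<in> T0} \<le> d ^ card P * card (carrier G) ^ (d - 1 - card P)"
proof -
  have "{..<d} - P \<noteq> {}"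
  proof
    assume "{..<d} - P = {}"
    then have "{..<d} \<subseteq> P" by auto
    then have "card {..<d} \<le> card P" using assms(2) by (intro card_mono) (auto intro: finite_subset)
    then show False using assms(3) by simp
  qed
  then obtain q where q: "q < d" "q \<notin> P" by auto
  have "card {xs \<in> allt d k. \<forall>i\<in>P. xs ! i \<in> T0} \<le> (\<Prod>i<d. if i \<in> {q} then 1 else card (if i \<in> P then T0 else carrier G))"
  proof (rule card_mask_le)
    fix xs ys assume a: "xs \<in> {xs \<in> allt d k. \<forall>i\<in>P. xs ! i \<in> T0}" "ys \<in> {xs \<in> allt d k. \<forall>i\<in>P. xs ! i \<in> T0}"
      "\<forall>i<d. i \<notin> {q} \<longrightarrow> xs ! i = ys ! i"
    then show "xs = ys" using q by (intro det[of xs d k ys q]) auto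
  qed (use assms in \<open>auto simp: allt_def\<close>)
  also have "\<dots> = (\<Prod>i<d. if i \<in> {q} then 1 else if i \<in> P then d else card (carrier G))"
    by (rule prod.cong) (auto simp: assms)
  also have "\<dots> = d ^ card P * card (carrier G) ^ (d - 1 - card P)"
    by (rule prod_if_const2) (use assms q in auto)
  finally show ?thesis .
qed

end

context group
begin

definition good :: "nat \<Rightarrow> 'a \<Rightarrow> 'a list set" where
  "good d k = {t \<in> allt d k. distinct t \<and> \<one> \<notin> set t}"

lemma good_finite: "finite (carrier G) \<Longrightarrow> finite (good d k)"
  unfolding good_def using allt_finite by auto

lemma good_set_card: "t \<in> good d k \<Longrightarrow> card (set t) = d"
  by (auto simp: good_def allt_def distinct_card)

lemma good_card_lower:
  assumes fin: "finite (carrier G)" and d: "d \<ge> 2" and k: "k \<in> carrier G"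
  shows "card (carrier G) ^ (d - 1) \<le> card (good d k) + d * card (carrier G) ^ (d - 2) +
     (\<Sum>ij\<in>{(i, j). i < j \<and> j < d}. card {xs \<in> allt d k. xs ! fst ij = xs ! snd ij})"
proof -
  define B1 where "B1 = (\<Union>i\<in>{..<d}. {xs \<in> allt d k. xs ! i = \<one>})"
  define B2 where "B2 = (\<Union>ij\<in>{(i, j). i < j \<and> j < d}. {xs \<in> allt d k. xs ! fst ij = xs ! snd ij})"
  have finP: "finite {(i, j). i < j \<and> j < (d::nat)}"
    by (rule finite_subset[of _ "{..<d} \<times> {..<d}"]) auto
  have sub: "allt d k \<subseteq> good d k \<union> B1 \<union> B2"
  proof
    fix xs assume xs: "xs \<in> allt d k"
    then have l: "length xs = d" by (simp add: allt_def)
    show "xs \<in> good d k \<union> B1 \<union> B2"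
    proof (cases "distinct xs \<and> \<one> \<notin> set xs")
      case True
      then show ?thesis using xs by (simp add: good_def)
    next
      case False
      then have "\<not> distinct xs \<or> \<one> \<in> set xs" by auto
      then show ?thesis
      proof
        assume "\<not> distinct xs"
        then obtain i j where "i < length xs" "j < length xs" "i \<noteq> j" "xs ! i = xs ! j"
          by (auto simp: distinct_conv_nth)
        then obtain i j where "i < j" "j < d" "xs ! i = xs ! j" using l
          by (metis linorder_neqE_nat)
        then show ?thesis using xs by (auto simp: B2_def)
      next
        assume "\<one> \<in> set xs"
        then obtain i where "i < d" "xs ! i = \<one>" using l by (auto simp: in_set_conv_nth)
        then show ?thesis using xs by (auto simp: B1_def)
      qed
    qed
  qed
  have "card (carrier G) ^ (d - 1) \<le> card (allt d k)" using fin d k by (intro allt_lower) auto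
  also have "\<dots> \<le> card (good d k \<union> B1 \<union> B2)"
    by (rule card_mono[OF _ sub]) (use fin good_finite allt_finite in \<open>auto simp: B1_def B2_def finP\<close>)
  also have "\<dots> \<le> card (good d k) + card B1 + card B2" by (meson add_mono card_Un_le le_trans order_refl)
  also have "card B1 \<le> (\<Sum>i\<in>{..<d}. card {xs \<in> allt d k. xs ! i = \<one>})"
    unfolding B1_def by (rule card_UN_le) simp
  also have "\<dots> \<le> (\<Sum>i\<in>{..<d}. card (carrier G) ^ (d - 2))"
    by (rule sum_mono) (use bad1 fin d in auto)
  also have "card B2 \<le> (\<Sum>ij\<in>{(i, j). i < j \<and> j < d}. card {xs \<in> allt d k. xs ! fst ij = xs ! snd ij})"
    unfolding B2_def by (rule card_UN_le[OF finP])
  finally show ?thesis by simp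
qed

lemma good_sets_card:
  assumes "finite (carrier G)"
  shows "card (good d k) \<le> card (set ` good d k) * fact d"
proof -
  have eq: "good d k = (\<Union>T\<in>set ` good d k. {t \<in> good d k. set t = T})" by auto
  have h: "card (\<Union>T\<in>set ` good d k. {t \<in> good d k. set t = T}) \<le> (\<Sum>T\<in>set ` good d k. card {t \<in> good d k. set t = T})"
    by (rule card_UN_le) (use assms good_finite in auto)
  have "card (good d k) \<le> (\<Sum>T\<in>set ` good d k. card {t \<in> good d k. set t = T})"
    by (rule le_trans[OF eq_imp_le[OF arg_cong[OF eq, of card]] h])
  also have "\<dots> \<le> (\<Sum>T\<in>set ` good d k. fact d)"
  proof (rule sum_mono)
    fix T assume T: "T \<in> set ` good d k"
    then have cT: "card T = d" "finite T" using good_set_card by auto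
    have "{t \<in> good d k. set t = T} \<subseteq> permutations_of_set T"
      by (auto simp: permutations_of_set_def good_def)
    then have "card {t \<in> good d k. set t = T} \<le> card (permutations_of_set T)"
      by (intro card_mono) auto
    then show "card {t \<in> good d k. set t = T} \<le> fact d" using cT by simp
  qed
  finally show ?thesis by simp
qed

lemma card_int_positions:
  assumes "t' \<in> good d k"
  shows "card {i. i < d \<and> t' ! i \<in> T} = card (T \<inter> set t')"
proof -
  have l: "length t' = d" "distinct t'" using assms by (auto simp: good_def allt_def)
  have "bij_betw (\<lambda>i. t' ! i) {i. i < d \<and> t' ! i \<in> T} (T \<inter> set t')"
  proof (rule bij_betw_imageI)
    show "inj_on (\<lambda>i. t' ! i) {i. i < d \<and> t' ! i \<in> T}"
      using l by (auto simp: inj_on_def nth_eq_iff_index_eq)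
    show "(\<lambda>i. t' ! i) ` {i. i < d \<and> t' ! i \<in> T} = T \<inter> set t'"
      using l by (auto simp: in_set_conv_nth)
  qed
  then show ?thesis by (rule bij_betw_same_card)
qed

lemma cnt_j:
  assumes fin: "finite (carrier G)" and t: "t \<in> good d k" and j: "j < d"
  shows "card {t' \<in> good d k. card (set t \<inter> set t') = j} \<le> (d choose j) * (d ^ j * card (carrier G) ^ (d - 1 - j))"
proof -
  define Ps where "Ps = {P. P \<subseteq> {..<d} \<and> card P = j}"
  have finPs: "finite Ps" unfolding Ps_def by (rule finite_subset[of _ "Pow {..<d}"]) auto
  have "{t' \<in> good d k. card (set t \<inter> set t') = j} \<subseteq> (\<Union>P\<in>Ps. {xs \<in> allt d k. \<forall>i\<in>P. xs ! i \<in> set t})"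
  proof
    fix t' assume a: "t' \<in> {t' \<in> good d k. card (set t \<inter> set t') = j}"
    define P where "P = {i. i < d \<and> t' ! i \<in> set t}"
    have "card P = j" using a card_int_positions[of t' d k "set t"] by (simp add: P_def)
    then have "P \<in> Ps" by (auto simp: Ps_def P_def)
    moreover have "t' \<in> {xs \<in> allt d k. \<forall>i\<in>P. xs ! i \<in> set t}" using a by (auto simp: P_def good_def)
    ultimately show "t' \<in> (\<Union>P\<in>Ps. {xs \<in> allt d k. \<forall>i\<in>P. xs ! i \<in> set t})" by blast
  qed
  then have "card {t' \<in> good d k. card (set t \<inter> set t') = j} \<le> card (\<Union>P\<in>Ps. {xs \<in> allt d k. \<forall>i\<in>P. xs ! i \<in> set t})"
    by (intro card_mono) (use fin allt_finite finPs in auto)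
  also have "\<dots> \<le> (\<Sum>P\<in>Ps. card {xs \<in> allt d k. \<forall>i\<in>P. xs ! i \<in> set t})"
    by (rule card_UN_le[OF finPs])
  also have "\<dots> \<le> (\<Sum>P\<in>Ps. d ^ j * card (carrier G) ^ (d - 1 - j))"
  proof (rule sum_mono)
    fix P assume "P \<in> Ps"
    then have P: "P \<subseteq> {..<d}" "card P = j" by (auto simp: Ps_def)
    show "card {xs \<in> allt d k. \<forall>i\<in>P. xs ! i \<in> set t} \<le> d ^ j * card (carrier G) ^ (d - 1 - j)"
      using posP[OF fin P(1), of "set t" k] P j good_set_card[OF t] by simp
  qed
  also have "\<dots> = card Ps * (d ^ j * card (carrier G) ^ (d - 1 - j))" by simp
  also have "card Ps = d choose j" unfolding Ps_def using n_subsets[of "{..<d}" j] by simp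
  finally show ?thesis .
qed

lemma delta_bound:
  assumes fin: "finite (carrier G)" and d: "d \<ge> 2" and p: "0 \<le> p"
  shows "(\<Sum>T\<in>set ` good d k. \<Sum>T'\<in>{T' \<in> set ` good d k. T' \<noteq> T \<and> T \<inter> T' \<noteq> {}}. p ^ card (T \<union> T'))
     \<le> real (card (good d k)) * (\<Sum>j\<in>{1..<d}. real (d choose j) * real d ^ j * real (card (carrier G)) ^ (d - 1 - j) * p ^ (2 * d - j))"
proof -
  define \<Theta> where "\<Theta> = (\<Sum>j\<in>{1..<d}. real (d choose j) * real d ^ j * real (card (carrier G)) ^ (d - 1 - j) * p ^ (2 * d - j))"
  define inner where "inner = (\<lambda>T. \<Sum>T'\<in>{T' \<in> set ` good d k. T' \<noteq> T \<and> T \<inter> T' \<noteq> {}}. p ^ card (T \<union> T'))"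
  have fg: "finite (good d k)" using fin by (rule good_finite)
  have "(\<Sum>T\<in>set ` good d k. inner T) \<le> (\<Sum>t\<in>good d k. inner (set t))"
    using sum_image_le[OF fg, of inner set] p by (simp add: inner_def comp_def sum_nonneg)
  also have "\<dots> \<le> (\<Sum>t\<in>good d k. \<Theta>)"
  proof (rule sum_mono)
    fix t assume t: "t \<in> good d k"
    define X where "X = {t' \<in> good d k. set t' \<noteq> set t \<and> set t \<inter> set t' \<noteq> {}}"
    define c where "c = (\<lambda>t'. card (set t \<inter> set t'))"
    have finX: "finite X" using fg by (simp add: X_def)
    have eqX: "{T' \<in> set ` good d k. T' \<noteq> set t \<and> set t \<inter> T' \<noteq> {}} = set ` X" by (auto simp: X_def)
    have cX: "\<And>t'. t' \<in> X \<Longrightarrow> c t' \<in> {1..<d} \<and> card (set t \<union> set t') = 2 * d - c t'"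
    proof -
      fix t' assume t': "t' \<in> X"
      have ct: "card (set t) = d" "card (set t') = d" using t t' good_set_card by (auto simp: X_def)
      have c0: "c t' \<noteq> 0" using t' by (auto simp: X_def c_def)
      have clt: "c t' < d"
      proof (rule ccontr)
        assume "\<not> c t' < d"
        moreover have "c t' \<le> d" unfolding c_def using ct by (metis card_mono finite_set inf_le1)
        ultimately have "card (set t \<inter> set t') = card (set t)" using ct by (simp add: c_def)
        then have "set t \<inter> set t' = set t" by (metis card_subset_eq finite_set inf_le1)
        moreover have "set t \<inter> set t' = set t'"
          using \<open>card (set t \<inter> set t') = card (set t)\<close> ct by (metis card_subset_eq finite_set inf_le2)
        ultimately show False using t' by (auto simp: X_def)
      qed
      have cu: "card (set t \<union> set t') + c t' = d + d"
        using card_Un_Int[of "set t" "set t'"] ct by (simp add: c_def)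
      show "c t' \<in> {1..<d} \<and> card (set t \<union> set t') = 2 * d - c t'" using c0 clt cu by auto
    qed
    have "inner (set t) = (\<Sum>T'\<in>set ` X. p ^ card (set t \<union> T'))" by (simp add: inner_def eqX)
    also have "\<dots> \<le> (\<Sum>t'\<in>X. p ^ card (set t \<union> set t'))"
      using sum_image_le[OF finX, of "\<lambda>T'. p ^ card (set t \<union> T')" set] p by (simp add: comp_def)
    also have "\<dots> = (\<Sum>t'\<in>X. p ^ (2 * d - c t'))" by (rule sum.cong) (use cX in auto)
    also have "\<dots> = (\<Sum>j\<in>c ` X. \<Sum>t'\<in>{x \<in> X. c x = j}. p ^ (2 * d - c t'))"
      by (rule sum.image_gen[OF finX])
    also have "\<dots> = (\<Sum>j\<in>c ` X. real (card {x \<in> X. c x = j}) * p ^ (2 * d - j))"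
      by (rule sum.cong) auto
    also have "\<dots> \<le> (\<Sum>j\<in>{1..<d}. real (card {x \<in> X. c x = j}) * p ^ (2 * d - j))"
      by (rule sum_mono2) (use cX p in auto)
    also have "\<dots> \<le> \<Theta>" unfolding \<Theta>_def
    proof (rule sum_mono)
      fix j assume j: "j \<in> {1..<d}"
      have "card {x \<in> X. c x = j} \<le> card {t' \<in> good d k. card (set t \<inter> set t') = j}"
        by (rule card_mono) (use fg in \<open>auto simp: X_def c_def\<close>)
      also have "\<dots> \<le> (d choose j) * (d ^ j * card (carrier G) ^ (d - 1 - j))"
        using cnt_j[OF fin t] j by auto
      finally have "real (card {x \<in> X. c x = j}) \<le> real (d choose j) * real d ^ j * real (card (carrier G)) ^ (d - 1 - j)"
        by (simp add: mult.assoc flip: of_nat_mult of_nat_power)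
      then show "real (card {x \<in> X. c x = j}) * p ^ (2 * d - j) \<le> real (d choose j) * real d ^ j * real (card (carrier G)) ^ (d - 1 - j) * p ^ (2 * d - j)"
        using p by (intro mult_right_mono) auto
    qed
    finally show "inner (set t) \<le> \<Theta>" .
  qed
  also have "\<dots> = real (card (good d k)) * \<Theta>" by simp
  finally show ?thesis by (simp add: inner_def \<Theta>_def)
qed

end

context group
begin

lemma reach_of_good:
  assumes "t \<in> good d k" "set t \<subseteq> S"
  shows "\<exists>n\<le>d. (cayley_adj G S ^^ n) \<one> k"
proof -
  have t: "length t = d" "set t \<subseteq> carrier G" "\<one> \<notin> set t" "prodl G t = k"
    using assms by (auto simp: good_def allt_def)
  have "(cayley_adj G S ^^ length t) \<one> (\<one> \<otimes> prodl G t)"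
    by (rule walk) (use assms t in auto)
  then show ?thesis using t by (auto simp: prodl_closed)
qed

lemma reach_sq:
  assumes "x \<in> carrier G" "x \<otimes> x = k" "k \<noteq> \<one>" "x \<in> S"
  shows "\<exists>n\<le>2. (cayley_adj G S ^^ n) \<one> k"
proof -
  have "x \<noteq> \<one>" using assms by auto
  then have "(cayley_adj G S ^^ length [x, x]) \<one> (\<one> \<otimes> prodl G [x, x])"
    by (intro walk) (use assms in auto)
  then show ?thesis using assms by (intro exI[of _ 2]) (auto simp: numeral_2_eq_2)
qed

lemma ev_antimono: "antimono (\<lambda>S. \<not> (\<exists>n\<le>d. (cayley_adj G S ^^ n) \<one> k))"
proof (rule antimonoI)
  fix S S' :: "'a set" assume "S \<le> S'"
  then have "\<And>x y. cayley_adj G S x y \<Longrightarrow> cayley_adj G S' x y" by (auto simp: cayley_adj_def)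
  then have "\<And>n x y. (cayley_adj G S ^^ n) x y \<Longrightarrow> (cayley_adj G S' ^^ n) x y"
    by (rule relpowp_mono)
  then show "(\<not> (\<exists>n\<le>d. (cayley_adj G S' ^^ n) \<one> k)) \<le> (\<not> (\<exists>n\<le>d. (cayley_adj G S ^^ n) \<one> k))"
    by auto
qed

lemma perk_janson:
  assumes fin: "finite (carrier G)" and d: "d \<ge> 2" and p: "0 \<le> p" "p \<le> 1"
  shows "meas p (carrier G) (\<lambda>S. \<not> (\<exists>n\<le>d. (cayley_adj G S ^^ n) \<one> k)) \<le>
    exp (- (real (card (good d k)) / fact d * p ^ d) + real (card (good d k)) *
      (\<Sum>j\<in>{1..<d}. real (d choose j) * real d ^ j * real (card (carrier G)) ^ (d - 1 - j) * p ^ (2 * d - j)))"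
proof -
  define I where "I = set ` good d k"
  have finI: "finite I" unfolding I_def using good_finite[OF fin] by simp
  have IU: "\<And>T. T \<in> I \<Longrightarrow> id T \<subseteq> carrier G" by (auto simp: I_def good_def allt_def)
  have "meas p (carrier G) (\<lambda>S. \<not> (\<exists>n\<le>d. (cayley_adj G S ^^ n) \<one> k)) \<le> meas p (carrier G) (\<lambda>S. \<forall>T\<in>I. \<not> id T \<subseteq> S)"
    by (rule meas_mono[OF fin p]) (auto simp: I_def dest: reach_of_good)
  also have "\<dots> \<le> exp (- (\<Sum>T\<in>I. p ^ card (id T)) + (\<Sum>T\<in>I. \<Sum>T'\<in>{T'\<in>I. T' \<noteq> T \<and> id T \<inter> id T' \<noteq> {}}. p ^ card (id T \<union> id T')))"
    by (rule janson[OF fin finI IU p])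
  also have "\<dots> \<le> exp (- (real (card (good d k)) / fact d * p ^ d) + real (card (good d k)) *
      (\<Sum>j\<in>{1..<d}. real (d choose j) * real d ^ j * real (card (carrier G)) ^ (d - 1 - j) * p ^ (2 * d - j)))"
  proof -
    have s1: "(\<Sum>T\<in>I. p ^ card (id T)) = real (card I) * p ^ d"
    proof -
      have "(\<Sum>T\<in>I. p ^ card (id T)) = (\<Sum>T\<in>I. p ^ d)"
        by (rule sum.cong) (auto simp: I_def good_set_card)
      then show ?thesis by simp
    qed
    have "real (card (good d k)) \<le> real (card I * fact d)"
      using good_sets_card[OF fin, of d k] by (simp only: I_def of_nat_le_iff)
    then have "real (card (good d k)) \<le> real (card I) * fact d"
      by (simp only: of_nat_mult of_nat_fact)
    then have "real (card (good d k)) / fact d \<le> real (card I)"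
      by (simp add: divide_le_eq)
    then have s2: "real (card (good d k)) / fact d * p ^ d \<le> (\<Sum>T\<in>I. p ^ card (id T))"
      unfolding s1 using p by (intro mult_right_mono) auto
    have s3: "(\<Sum>T\<in>I. \<Sum>T'\<in>{T'\<in>I. T' \<noteq> T \<and> id T \<inter> id T' \<noteq> {}}. p ^ card (id T \<union> id T')) \<le>
      real (card (good d k)) * (\<Sum>j\<in>{1..<d}. real (d choose j) * real d ^ j * real (card (carrier G)) ^ (d - 1 - j) * p ^ (2 * d - j))"
      using delta_bound[OF fin d p(1), of k] by (simp add: I_def)
    show ?thesis using s2 s3 by simp
  qed
  finally show ?thesis .
qed

lemma perk_sq:
  assumes fin: "finite (carrier G)" and p: "0 \<le> p" "p \<le> 1" and k: "k \<noteq> \<one>"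
  shows "meas p (carrier G) (\<lambda>S. \<not> (\<exists>n\<le>2. (cayley_adj G S ^^ n) \<one> k)) \<le>
    exp (- (real (card {x \<in> carrier G. x \<otimes> x = k}) * p))"
proof -
  define R where "R = {x \<in> carrier G. x \<otimes> x = k}"
  have finR: "finite R" using fin by (simp add: R_def)
  have RU: "\<And>x. x \<in> R \<Longrightarrow> {x} \<subseteq> carrier G" by (auto simp: R_def)
  have "meas p (carrier G) (\<lambda>S. \<not> (\<exists>n\<le>2. (cayley_adj G S ^^ n) \<one> k)) \<le> meas p (carrier G) (\<lambda>S. \<forall>x\<in>R. \<not> {x} \<subseteq> S)"
    by (rule meas_mono[OF fin p]) (use k in \<open>auto simp: R_def dest: reach_sq\<close>)
  also have "\<dots> \<le> exp (- (\<Sum>x\<in>R. p ^ card {x}) + (\<Sum>x\<in>R. \<Sum>y\<in>{y\<in>R. y \<noteq> x \<and> {x} \<inter> {y} \<noteq> {}}. p ^ card ({x} \<union> {y})))"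
    by (rule janson[OF fin finR RU p])
  also have "\<dots> = exp (- (real (card R) * p))" by simp
  finally show ?thesis by (simp add: R_def)
qed

end

lemma binom_partial:
  fixes z :: real and d :: nat
  assumes "z \<ge> 0" "d \<ge> 1"
  shows "(\<Sum>j\<in>{1..<d}. real (d choose j) * z ^ j) \<le> (1 + z) ^ d - 1"
proof -
  have "(1 + z) ^ d = (z + 1) ^ d" by (simp add: add.commute)
  also have "\<dots> = (\<Sum>j\<le>d. real (d choose j) * z ^ j * 1 ^ (d - j))" by (rule binomial_ring)
  also have "\<dots> = (\<Sum>j\<le>d. real (d choose j) * z ^ j)" by simp
  finally have e: "(1 + z) ^ d = (\<Sum>j\<le>d. real (d choose j) * z ^ j)" .
  have "{..d} = insert 0 (insert d {1..<d})" using assms by auto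
  then have "(\<Sum>j\<le>d. real (d choose j) * z ^ j) = 1 + real (d choose d) * z ^ d + (\<Sum>j\<in>{1..<d}. real (d choose j) * z ^ j)"
    using assms by (simp add: sum.insert)
  then show ?thesis using e assms by simp
qed

lemma sum_exp_bound:
  fixes z :: real and d :: nat
  assumes "z \<ge> 0" "d \<ge> 1" "d * z \<le> 1/2"
  shows "(\<Sum>j\<in>{1..<d}. real (d choose j) * z ^ j) \<le> 2 * d * z"
proof -
  have "(1 + z) ^ d \<le> exp z ^ d" using assms by (intro power_mono) auto
  also have "\<dots> = exp (d * z)" by (simp add: exp_of_nat_mult)
  also have "\<dots> \<le> 1 + 2 * (d * z)"
    using exp_bound_lemma[of "d * z"] assms by simp
  finally show ?thesis using binom_partial[OF assms(1,2)] by simp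
qed

lemma an1:
  fixes x p0 g B \<epsilon> L :: real and d :: nat
  assumes x: "x > 0" and d: "d \<ge> 2" and \<epsilon>: "\<epsilon> > 0" and L: "L \<ge> 1"
    and p0: "p0 > 0" "p0 ^ d = fact d * (1 + \<epsilon>) * L / x ^ (d - 1)"
    and g: "x ^ (d - 1) - B \<le> g" "g \<le> x ^ (d - 1)" and B: "B \<le> \<epsilon> / (4 * (1 + \<epsilon>)) * x ^ (d - 1)"
    and y: "x * p0 \<ge> 16 * real d ^ 2 * (fact d * (1 + \<epsilon>))\<^sup>2 * L * (1 + 1 / \<epsilon>)"
  shows "- (g / fact d * p0 ^ d) + g * (\<Sum>j\<in>{1..<d}. real (d choose j) * real d ^ j * x ^ (d - 1 - j) * p0 ^ (2 * d - j))
     \<le> - (1 + \<epsilon> / 2) * L"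
proof -
  define c where "c = fact d * (1 + \<epsilon>)"
  define y where "y = x * p0"
  define m where "m = c * L"
  have c1: "c \<ge> 1"
  proof -
    have "(1::real) \<le> fact d" by (rule fact_ge_1)
    then have "1 * 1 \<le> fact d * (1 + \<epsilon>)" using \<epsilon> by (intro mult_mono) auto
    then show ?thesis by (simp add: c_def)
  qed
  have ypos: "y > 0" using x p0 by (simp add: y_def)
  have xd: "x ^ (d - 1) > 0" using x by simp
  have m_eq: "x ^ (d - 1) * p0 ^ d = m" using p0(2) xd x by (simp add: m_def c_def field_simps)
  define \<Theta> where "\<Theta> = (\<Sum>j\<in>{1..<d}. real (d choose j) * real d ^ j * x ^ (d - 1 - j) * p0 ^ (2 * d - j))"
  have \<Theta>0: "\<Theta> \<ge> 0" unfolding \<Theta>_def using x p0 by (intro sum_nonneg) auto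
  have trm: "x ^ (d - 1) * (real (d choose j) * real d ^ j * x ^ (d - 1 - j) * p0 ^ (2 * d - j)) = m\<^sup>2 * (real (d choose j) * (real d / y) ^ j)"
    if j: "j \<in> {1..<d}" for j
  proof -
    have e1: "x ^ (d - 1) * x ^ (d - 1 - j) * x ^ j = x ^ (d - 1) * x ^ (d - 1)"
    proof -
      have "x ^ (d - 1) * x ^ (d - 1 - j) * x ^ j = x ^ ((d - 1) + (d - 1 - j) + j)" by (simp add: power_add)
      also have "(d - 1) + (d - 1 - j) + j = (d - 1) + (d - 1)" using j by auto
      finally show ?thesis by (simp add: power_add)
    qed
    have e2: "p0 ^ (2 * d - j) * p0 ^ j = p0 ^ d * p0 ^ d"
    proof -
      have "p0 ^ (2 * d - j) * p0 ^ j = p0 ^ ((2 * d - j) + j)" by (simp add: power_add)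
      also have "(2 * d - j) + j = d + d" using j by auto
      finally show ?thesis by (simp add: power_add)
    qed
    have "x ^ (d - 1) * x ^ (d - 1 - j) * p0 ^ (2 * d - j) * y ^ j = m\<^sup>2"
    proof -
      have "x ^ (d - 1) * x ^ (d - 1 - j) * p0 ^ (2 * d - j) * y ^ j = (x ^ (d - 1) * x ^ (d - 1 - j) * x ^ j) * (p0 ^ (2 * d - j) * p0 ^ j)"
        by (simp add: y_def power_mult_distrib mult_ac)
      also have "\<dots> = (x ^ (d - 1) * p0 ^ d)\<^sup>2" unfolding e1 e2 by (simp add: power2_eq_square mult_ac)
      finally show ?thesis using m_eq by simp
    qed
    then have "x ^ (d - 1) * x ^ (d - 1 - j) * p0 ^ (2 * d - j) = m\<^sup>2 / y ^ j"
      using ypos by (simp add: eq_divide_eq)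
    then show ?thesis by (simp add: power_divide field_simps)
  qed
  have "x ^ (d - 1) * \<Theta> = m\<^sup>2 * (\<Sum>j\<in>{1..<d}. real (d choose j) * (real d / y) ^ j)"
    unfolding \<Theta>_def sum_distrib_left by (rule sum.cong) (use trm in auto)
  also have "\<dots> \<le> m\<^sup>2 * (2 * d * (real d / y))"
  proof (rule mult_left_mono)
    have "y \<ge> 16 * real d ^ 2 * c\<^sup>2 * L * (1 + 1 / \<epsilon>)" using y by (simp add: y_def c_def)
    moreover have "16 * real d ^ 2 * c\<^sup>2 * L * (1 + 1 / \<epsilon>) \<ge> 2 * real d ^ 2"
    proof -
      have a1: "c\<^sup>2 \<ge> 1" using c1 by (simp add: one_le_power)
      have a2: "1 + 1 / \<epsilon> \<ge> 1" using \<epsilon> by simp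
      have "1 * 1 \<le> c\<^sup>2 * L" using a1 L by (intro mult_mono) auto
      then have "1 * 1 \<le> (c\<^sup>2 * L) * (1 + 1 / \<epsilon>)" using a2 by (intro mult_mono) auto
      then have "2 \<le> 16 * (c\<^sup>2 * L * (1 + 1 / \<epsilon>))" by linarith
      then have h: "real d ^ 2 * 2 \<le> real d ^ 2 * (16 * (c\<^sup>2 * L * (1 + 1 / \<epsilon>)))"
        by (rule mult_left_mono) simp
      have "16 * real d ^ 2 * c\<^sup>2 * L * (1 + 1 / \<epsilon>) = real d ^ 2 * (16 * (c\<^sup>2 * L * (1 + 1 / \<epsilon>)))"
        by (simp only: mult_ac)
      then show ?thesis using h by (metis mult.commute)
    qed
    ultimately have "y \<ge> 2 * real d ^ 2" by linarith
    then have "d * (real d / y) \<le> 1 / 2" using ypos by (simp add: field_simps power2_eq_square)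
    then show "(\<Sum>j\<in>{1..<d}. real (d choose j) * (real d / y) ^ j) \<le> 2 * d * (real d / y)"
      using d ypos by (intro sum_exp_bound) auto
  qed simp
  also have "\<dots> \<le> \<epsilon> * L / 4"
  proof -
    have yb: "y \<ge> 16 * real d ^ 2 * c\<^sup>2 * L * (1 + 1 / \<epsilon>)" using y by (simp add: y_def c_def)
    have nz: "c \<noteq> 0" "L \<noteq> 0" "real d \<noteq> 0" "\<epsilon> \<noteq> 0" "1 + \<epsilon> \<noteq> 0" using c1 L d \<epsilon> by auto
    have "m\<^sup>2 * (2 * d * (real d / y)) = 2 * real d ^ 2 * c\<^sup>2 * L\<^sup>2 / y" by (simp add: m_def power2_eq_square field_simps)
    also have "\<dots> \<le> 2 * real d ^ 2 * c\<^sup>2 * L\<^sup>2 / (16 * real d ^ 2 * c\<^sup>2 * L * (1 + 1 / \<epsilon>))"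
      using yb c1 L \<epsilon> d ypos by (intro divide_left_mono) (auto intro!: mult_pos_pos add_pos_pos)
    also have "\<dots> = (2 * real d ^ 2 * c\<^sup>2 * L) * L / ((2 * real d ^ 2 * c\<^sup>2 * L) * (8 * (1 + 1 / \<epsilon>)))"
      by (simp add: power2_eq_square mult_ac)
    also have "\<dots> = L / (8 * (1 + 1 / \<epsilon>))"
      using nz by (subst mult_divide_mult_cancel_left) auto
    also have "\<dots> = \<epsilon> * L / (8 * (\<epsilon> + 1))" using \<epsilon> by (simp add: field_simps)
    also have "\<dots> \<le> \<epsilon> * L / 4" using \<epsilon> L by (simp add: field_simps)
    finally show ?thesis .
  qed
  finally have D: "x ^ (d - 1) * \<Theta> \<le> \<epsilon> * L / 4" .
  have gT: "g * \<Theta> \<le> \<epsilon> * L / 4" using g(2) \<Theta>0 D by (meson mult_right_mono order.trans)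
  have "g / fact d * p0 ^ d = g * ((1 + \<epsilon>) * L) / x ^ (d - 1)" using p0 by simp
  also have "\<dots> \<ge> (x ^ (d - 1) - B) * ((1 + \<epsilon>) * L) / x ^ (d - 1)"
    using g(1) \<epsilon> L xd by (intro divide_right_mono mult_right_mono) auto
  finally have gm: "g / fact d * p0 ^ d \<ge> (x ^ (d - 1) - B) * ((1 + \<epsilon>) * L) / x ^ (d - 1)" .
  have e1: "(x ^ (d - 1) - B) * ((1 + \<epsilon>) * L) / x ^ (d - 1) = x ^ (d - 1) * ((1 + \<epsilon>) * L) / x ^ (d - 1) - B / x ^ (d - 1) * ((1 + \<epsilon>) * L)"
    by (simp add: left_diff_distrib diff_divide_distrib)
  have e2: "x ^ (d - 1) * ((1 + \<epsilon>) * L) / x ^ (d - 1) = (1 + \<epsilon>) * L"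
    using xd x by simp
  have e3: "B / x ^ (d - 1) * ((1 + \<epsilon>) * L) \<le> \<epsilon> / (4 * (1 + \<epsilon>)) * ((1 + \<epsilon>) * L)"
    using B xd \<epsilon> L by (intro mult_right_mono) (auto simp: divide_le_eq)
  have e4: "\<epsilon> / (4 * (1 + \<epsilon>)) * ((1 + \<epsilon>) * L) = \<epsilon> * L / 4" using \<epsilon> by (simp add: field_simps)
  have "g / fact d * p0 ^ d \<ge> (1 + \<epsilon>) * L - \<epsilon> * L / 4" using gm e1 e2 e3 e4 by linarith
  then show ?thesis using gT unfolding \<Theta>_def by (simp add: algebra_simps)
qed

lemma an2:
  fixes x \<epsilon> L K p0 :: real and d :: nat
  assumes x: "x > 0" and Ldef: "L = ln x" and L0: "L > 0" and lnL: "ln L \<ge> 1" and d: "d \<ge> 2"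
    and dL: "real d ^ 2 \<le> L / (2 * ln L)" and \<epsilon>: "\<epsilon> > 0"
    and Kdef: "K = ln 16 + ln (1 + 1 / \<epsilon>) + 2 * ln (1 + \<epsilon>)"
    and cond: "sqrt L * (K + 2 * ln L) \<le> L / 2"
    and p0: "p0 \<ge> 0" "p0 ^ d = fact d * (1 + \<epsilon>) * L / x ^ (d - 1)"
  shows "x * p0 \<ge> 16 * real d ^ 2 * (fact d * (1 + \<epsilon>))\<^sup>2 * L * (1 + 1 / \<epsilon>)"
proof -
  define c where "c = fact d * (1 + \<epsilon>)"
  define M where "M = 16 * real d ^ 2 * c\<^sup>2 * L * (1 + 1 / \<epsilon>)"
  have c1: "c \<ge> 1"
  proof -
    have "(1::real) \<le> fact d" by (rule fact_ge_1)
    then have "1 * 1 \<le> fact d * (1 + \<epsilon>)" using \<epsilon> by (intro mult_mono) auto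
    then show ?thesis by (simp add: c_def)
  qed
  have Lpos: "L > 1"
  proof (rule ccontr)
    assume "\<not> L > 1"
    then have "ln L \<le> 0" using L0 by simp
    then show False using lnL by simp
  qed
  have dpos: "real d \<ge> 2" using d by simp
  have lnLpos: "ln L > 0" using lnL by simp
  have d2L: "real d ^ 2 * ln L \<le> L / 2"
    using dL lnLpos by (simp add: le_divide_eq mult.commute)
  have d2L': "real d ^ 2 \<le> L"
  proof -
    have "real d ^ 2 \<le> real d ^ 2 * ln L" using lnL by (simp add: mult_le_cancel_left1)
    then show ?thesis using d2L Lpos by linarith
  qed
  have dsq: "real d \<le> sqrt L" using d2L' by (metis of_nat_0_le_iff real_le_rsqrt)
  have lnd: "2 * ln (real d) \<le> ln L"
  proof -
    have "ln (real d ^ 2) \<le> ln L" using d2L' dpos L0 by (subst ln_le_cancel_iff) auto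
    then show ?thesis using dpos by (simp add: ln_realpow)
  qed
  have lnc: "ln c \<le> real d * ln (real d) + ln (1 + \<epsilon>)"
  proof -
    have "fact d \<le> (real d) ^ d" using fact_le_power[of d] by simp
    then have "ln (fact d) \<le> ln ((real d) ^ d)" using dpos by (subst ln_le_cancel_iff) auto
    also have "\<dots> = real d * ln (real d)" using dpos by (simp add: ln_realpow)
    finally show ?thesis unfolding c_def using \<epsilon> by (simp add: ln_mult)
  qed
  have K0: "K \<ge> 0"
  proof -
    have "ln 16 \<ge> (0::real)" by simp
    moreover have "ln (1 + 1 / \<epsilon>) \<ge> 0" using \<epsilon> by simp
    moreover have "ln (1 + \<epsilon>) \<ge> 0" using \<epsilon> by simp
    ultimately show ?thesis using Kdef by linarith
  qed
  have lnM: "ln M = ln 16 + 2 * ln (real d) + 2 * ln c + ln L + ln (1 + 1 / \<epsilon>)"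
  proof -
    have e1: "1 + 1 / \<epsilon> > 0" using \<epsilon> by (simp add: add_pos_pos)
    have "ln M = ln (16 * real d ^ 2 * c\<^sup>2 * L) + ln (1 + 1 / \<epsilon>)"
      unfolding M_def using e1 dpos c1 Lpos by (subst ln_mult) auto
    also have "ln (16 * real d ^ 2 * c\<^sup>2 * L) = ln 16 + ln (real d ^ 2) + ln (c\<^sup>2) + ln L"
      using dpos c1 Lpos by (simp add: ln_mult)
    finally show ?thesis using dpos c1 by (simp add: ln_realpow)
  qed
  have "real d * ln M \<le> real d * K + 2 * real d * ln (real d) + 2 * (real d ^ 2 * ln (real d)) + real d * ln L"
  proof -
    have "real d * ln M = real d * (ln 16 + ln (1 + 1 / \<epsilon>)) + 2 * real d * ln (real d) + 2 * real d * ln c + real d * ln L"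
      unfolding lnM by (simp add: algebra_simps)
    also have "2 * real d * ln c \<le> 2 * real d * (real d * ln (real d) + ln (1 + \<epsilon>))"
      using lnc dpos by (intro mult_left_mono) auto
    finally show ?thesis unfolding Kdef by (simp add: algebra_simps power2_eq_square)
  qed
  also have "\<dots> \<le> real d * (K + 2 * ln L) + real d ^ 2 * ln L"
  proof -
    have "2 * real d * ln (real d) \<le> real d * ln L" using lnd dpos by (simp add: mult.assoc mult_left_mono)
    moreover have "2 * (real d ^ 2 * ln (real d)) \<le> real d ^ 2 * ln L"
      using mult_left_mono[OF lnd, of "real d ^ 2"] by (simp add: mult_ac)
    ultimately show ?thesis by (simp add: algebra_simps)
  qed
  also have "\<dots> \<le> sqrt L * (K + 2 * ln L) + L / 2"
    using dsq K0 lnLpos d2L by (intro add_mono mult_right_mono) auto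
  also have "\<dots> \<le> L" using cond by simp
  finally have dM: "real d * ln M \<le> ln x" using Ldef by simp
  have e1: "1 + 1 / \<epsilon> > 0" using \<epsilon> by (simp add: add_pos_pos)
  have Mpos: "M > 0" unfolding M_def using dpos c1 Lpos e1 by (intro mult_pos_pos) auto
  have "M ^ d = exp (real d * ln M)" using Mpos by (simp add: exp_of_nat_mult)
  also have "\<dots> \<le> exp (ln x)" using dM by simp
  also have "\<dots> = x" using x by simp
  also have "x \<le> (x * p0) ^ d"
  proof -
    have "(x * p0) ^ d = x ^ d * p0 ^ d" by (simp add: power_mult_distrib)
    also have "\<dots> = x * (c * L)"
    proof -
      have "x ^ d = x * x ^ (d - 1)" using d by (cases d) auto
      then show ?thesis using p0(2) x by (simp add: c_def field_simps)
    qed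
    finally have e: "(x * p0) ^ d = x * (c * L)" .
    have "c * L \<ge> 1 * 1" using c1 Lpos by (intro mult_mono) auto
    then show ?thesis unfolding e using x by (simp add: mult_le_cancel_left1)
  qed
  finally have "M ^ d \<le> (x * p0) ^ d" .
  moreover obtain e where de: "d = Suc e" using d by (cases d) auto
  ultimately have "M ^ Suc e \<le> (x * p0) ^ Suc e" by simp
  then have "M \<le> x * p0" using x p0 by (intro power_le_imp_le_base[of M e]) auto
  then show ?thesis by (simp add: M_def c_def)
qed

lemma an3:
  fixes r x p0 \<epsilon> L \<beta> :: real
  assumes r: "r \<ge> \<beta> * x - 2" and b4: "\<beta> * x \<ge> 4" and b5: "\<beta>\<^sup>2 * x \<ge> 4 * (1 + \<epsilon> / 2)\<^sup>2 * L"
    and L: "L > 0" and x: "x > 0" and \<epsilon>: "\<epsilon> > 0" and p0: "p0 \<ge> 0" "p0\<^sup>2 = 2 * (1 + \<epsilon>) * L / x"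
  shows "r * p0 \<ge> (1 + \<epsilon> / 2) * L"
proof -
  have r2: "r \<ge> \<beta> * x / 2" using r b4 by linarith
  have bx0: "\<beta> * x / 2 \<ge> 0" using b4 by linarith
  have p2: "p0\<^sup>2 \<ge> 2 * L / x" using p0 L x \<epsilon> by (simp add: divide_right_mono mult_right_mono)
  have "(r * p0)\<^sup>2 = r\<^sup>2 * p0\<^sup>2" by (simp add: power_mult_distrib)
  also have "\<dots> \<ge> (\<beta> * x / 2)\<^sup>2 * (2 * L / x)"
    using r2 bx0 p2 L x by (intro mult_mono power_mono) auto
  finally have h: "(r * p0)\<^sup>2 \<ge> (\<beta> * x / 2)\<^sup>2 * (2 * L / x)" .
  have "(\<beta> * x / 2)\<^sup>2 * (2 * L / x) = \<beta>\<^sup>2 * x * L / 2" using x by (simp add: power2_eq_square field_simps)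
  also have "\<dots> \<ge> 4 * (1 + \<epsilon> / 2)\<^sup>2 * L * L / 2" using b5 L by (intro divide_right_mono mult_right_mono) auto
  also have "4 * (1 + \<epsilon> / 2)\<^sup>2 * L * L / 2 \<ge> ((1 + \<epsilon> / 2) * L)\<^sup>2"
  proof -
    have a0: "0 \<le> ((1 + \<epsilon> / 2) * L)\<^sup>2" by simp
    have "4 * (1 + \<epsilon> / 2)\<^sup>2 * L * L / 2 = 2 * ((1 + \<epsilon> / 2) * L)\<^sup>2" by (simp add: power2_eq_square)
    then show ?thesis using a0 by linarith
  qed
  finally have "((1 + \<epsilon> / 2) * L)\<^sup>2 \<le> (r * p0)\<^sup>2" using h by linarith
  moreover have "r * p0 \<ge> 0" using r2 bx0 p0 by simp
  ultimately show ?thesis by (rule power2_le_imp_le)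
qed

context group
begin

lemma perk_final:
  fixes \<epsilon> L p0 :: real
  assumes fin: "finite (carrier G)" and Ndef: "N = card (carrier G)"
    and d: "d \<ge> 2" and \<epsilon>: "\<epsilon> > 0" and Ldef: "L = ln (real N)" and L0: "L > 0" and lnL: "ln L \<ge> 1"
    and dL: "real d ^ 2 \<le> L / (2 * ln L)"
    and C2: "sqrt L * (ln 16 + ln (1 + 1 / \<epsilon>) + 2 * ln (1 + \<epsilon>) + 2 * ln L) \<le> L / 2"
    and C3: "2 * L / real N \<le> \<epsilon> / (4 * (1 + \<epsilon>))"
    and C4: "\<epsilon> / (4 * (1 + \<epsilon>)) * real N \<ge> 4"
    and C5: "(\<epsilon> / (4 * (1 + \<epsilon>)))\<^sup>2 * real N \<ge> 4 * (1 + \<epsilon> / 2)\<^sup>2 * L"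
    and p0: "p0 > 0" "p0 \<le> 1" "p0 ^ d = fact d * (1 + \<epsilon>) * L / real N ^ (d - 1)"
    and k: "k \<in> carrier G" "k \<noteq> \<one>"
  shows "meas p0 (carrier G) (\<lambda>S. \<not> (\<exists>n\<le>d. (cayley_adj G S ^^ n) \<one> k)) \<le> exp (- (1 + \<epsilon> / 2) * L)"
proof -
  define \<beta> where "\<beta> = \<epsilon> / (4 * (1 + \<epsilon>))"
  define X where "X = real N ^ (d - 1)"
  define g where "g = real (card (good d k))"
  define \<Theta> where "\<Theta> = (\<Sum>j\<in>{1..<d}. real (d choose j) * real d ^ j * real (card (carrier G)) ^ (d - 1 - j) * p0 ^ (2 * d - j))"
  have Npos: "real N > 0"
  proof (rule ccontr)
    assume "\<not> real N > 0"
    then have "N = 0" by simp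
    then show False using L0 Ldef by simp
  qed
  have \<beta>0: "\<beta> > 0" using \<epsilon> by (simp add: \<beta>_def)
  have L1: "L \<ge> 1"
  proof (rule ccontr)
    assume "\<not> L \<ge> 1"
    then have "ln L \<le> 0" using L0 by simp
    then show False using lnL by simp
  qed
  have y: "real N * p0 \<ge> 16 * real d ^ 2 * (fact d * (1 + \<epsilon>))\<^sup>2 * L * (1 + 1 / \<epsilon>)"
    by (rule an2[OF Npos Ldef L0 lnL d dL \<epsilon> refl _ _ p0(3)]) (use C2 p0 in \<open>auto simp: algebra_simps\<close>)
  have jan: "meas p0 (carrier G) (\<lambda>S. \<not> (\<exists>n\<le>d. (cayley_adj G S ^^ n) \<one> k)) \<le> exp (- (g / fact d * p0 ^ d) + g * \<Theta>)"
    unfolding g_def \<Theta>_def using perk_janson[OF fin d, of p0 k] p0 by simp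
  have gX: "g \<le> X"
  proof -
    have "card (good d k) \<le> card (allt d k)"
      by (rule card_mono) (use allt_finite[OF fin] in \<open>auto simp: good_def\<close>)
    also have "\<dots> \<le> N ^ (d - 1)" using allt_upper[OF fin, of d k] d Ndef by simp
    finally show ?thesis unfolding g_def X_def by (metis of_nat_le_iff of_nat_power)
  qed
  have low: "N ^ (d - 1) \<le> card (good d k) + d * N ^ (d - 2) +
     (\<Sum>ij\<in>{(i, j). i < j \<and> j < d}. card {xs \<in> allt d k. xs ! fst ij = xs ! snd ij})"
    using good_card_lower[OF fin d k(1)] Ndef by simp
  have finish: "meas p0 (carrier G) (\<lambda>S. \<not> (\<exists>n\<le>d. (cayley_adj G S ^^ n) \<one> k)) \<le> exp (- (1 + \<epsilon> / 2) * L)"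
    if B: "X - B \<le> g" "B \<le> \<beta> * X" for B
  proof -
    have "- (g / fact d * p0 ^ d) + g * \<Theta> \<le> - (1 + \<epsilon> / 2) * L"
      unfolding \<Theta>_def Ndef[symmetric]
      by (rule an1[OF Npos d \<epsilon> L1 p0(1) p0(3)]) (use B gX y in \<open>auto simp: X_def \<beta>_def\<close>)
    then show ?thesis using jan by (meson exp_le_cancel_iff order.trans)
  qed
  have dL': "real d ^ 2 \<le> L"
  proof -
    have "L * 1 \<le> L * (2 * ln L)" using L0 lnL by (intro mult_left_mono) auto
    then have "L / (2 * ln L) \<le> L" using lnL by (simp add: divide_le_eq mult.commute)
    then show ?thesis using dL by linarith
  qed
  show ?thesis
  proof (cases "d \<ge> 3")
    case True
    have "(\<Sum>ij\<in>{(i, j). i < j \<and> j < d}. card {xs \<in> allt d k. xs ! fst ij = xs ! snd ij}) \<le>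
          (\<Sum>ij\<in>{(i, j). i < j \<and> j < d}. N ^ (d - 2))"
      by (rule sum_mono) (use bad2[OF fin True] Ndef in auto)
    also have "\<dots> = card {(i, j). i < j \<and> j < d} * N ^ (d - 2)" by simp
    also have "\<dots> \<le> (d * d) * N ^ (d - 2)"
    proof -
      have "card {(i, j). i < j \<and> j < d} \<le> card ({..<d} \<times> {..<d})"
        by (rule card_mono) auto
      then show ?thesis by (simp add: card_cartesian_product)
    qed
    finally have "N ^ (d - 1) \<le> card (good d k) + (d + d * d) * N ^ (d - 2)" using low by (simp add: algebra_simps)
    then have lowr: "X - real ((d + d * d) * N ^ (d - 2)) \<le> g"
      unfolding X_def g_def by (metis of_nat_add of_nat_le_iff of_nat_power diff_le_eq)
    have "real ((d + d * d) * N ^ (d - 2)) \<le> \<beta> * X"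
    proof -
      have "real (d + d * d) \<le> 2 * real d ^ 2" using d by (simp add: power2_eq_square)
      also have "\<dots> \<le> 2 * L" using dL' by simp
      also have "\<dots> \<le> \<beta> * real N" using C3 Npos by (simp add: \<beta>_def divide_le_eq mult.commute)
      finally have h1: "real (d + d * d) * real N ^ (d - 2) \<le> \<beta> * real N * real N ^ (d - 2)"
        using Npos by (intro mult_right_mono) auto
      have e: "real N * real N ^ (d - 2) = X"
      proof -
        have "d - 1 = Suc (d - 2)" using d by simp
        then show ?thesis unfolding X_def by simp
      qed
      have e2: "\<beta> * X = \<beta> * real N * real N ^ (d - 2)" by (simp add: e[symmetric] mult.assoc)
      have e3: "real ((d + d * d) * N ^ (d - 2)) = real (d + d * d) * real N ^ (d - 2)" by simp
      show ?thesis using h1 e2 e3 by linarith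
    qed
    then show ?thesis using finish lowr by blast
  next
    case False
    then have d2: "d = 2" using d by simp
    define r where "r = card {x \<in> carrier G. x \<otimes> x = k}"
    have pairs: "{(i, j). i < j \<and> j < (2::nat)} = {(0, 1)}" by auto
    have "N \<le> card (good 2 k) + 2 + r"
      using low bad2_d2[OF fin, of k] unfolding d2 pairs by (simp add: r_def)
    then have lowr: "real N - real (2 + r) \<le> real (card (good 2 k))" by simp
    show ?thesis
    proof (cases "real (2 + r) \<le> \<beta> * real N")
      case True
      then show ?thesis using finish[of "real (2 + r)"] lowr by (simp add: X_def g_def d2)
    next
      case False
      have "meas p0 (carrier G) (\<lambda>S. \<not> (\<exists>n\<le>2. (cayley_adj G S ^^ n) \<one> k)) \<le> exp (- (real r * p0))"
        using perk_sq[OF fin _ p0(2) k(2)] p0(1) by (simp add: r_def)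
      also have "\<dots> \<le> exp (- (1 + \<epsilon> / 2) * L)"
      proof -
        have "real r * p0 \<ge> (1 + \<epsilon> / 2) * L"
        proof (rule an3)
          show "real r \<ge> \<beta> * real N - 2" using False by simp
          show "\<beta> * real N \<ge> 4" using C4 by (simp add: \<beta>_def)
          show "\<beta>\<^sup>2 * real N \<ge> 4 * (1 + \<epsilon> / 2)\<^sup>2 * L" using C5 by (simp add: \<beta>_def)
          show "p0\<^sup>2 = 2 * (1 + \<epsilon>) * L / real N" using p0(3) by (simp add: d2)
        qed (use L0 Npos \<epsilon> p0 in auto)
        then show ?thesis by (simp add: algebra_simps)
      qed
      finally show ?thesis by (simp add: d2)
    qed
  qed
qed

lemma main_bound:
  fixes \<epsilon> L p0 p :: real
  assumes fin: "finite (carrier G)" and Ndef: "N = card (carrier G)"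
    and d: "d \<ge> 2" and \<epsilon>: "\<epsilon> > 0" and Ldef: "L = ln (real N)" and L0: "L > 0" and lnL: "ln L \<ge> 1"
    and dL: "real d ^ 2 \<le> L / (2 * ln L)"
    and C2: "sqrt L * (ln 16 + ln (1 + 1 / \<epsilon>) + 2 * ln (1 + \<epsilon>) + 2 * ln L) \<le> L / 2"
    and C3: "2 * L / real N \<le> \<epsilon> / (4 * (1 + \<epsilon>))"
    and C4: "\<epsilon> / (4 * (1 + \<epsilon>)) * real N \<ge> 4"
    and C5: "(\<epsilon> / (4 * (1 + \<epsilon>)))\<^sup>2 * real N \<ge> 4 * (1 + \<epsilon> / 2)\<^sup>2 * L"
    and p0: "p0 > 0" "p0 \<le> p" "p \<le> 1" "p0 ^ d = fact d * (1 + \<epsilon>) * L / real N ^ (d - 1)"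
  shows "meas p (carrier G) (\<lambda>S. enat d < cayley_diam G S) \<le> real N * exp (- (1 + \<epsilon> / 2) * L)"
proof -
  define Ev where "Ev = (\<lambda>k S. \<not> (\<exists>n\<le>d. (cayley_adj G S ^^ n) \<one> k))"
  have p: "0 \<le> p" using p0 by simp
  have finK: "finite (carrier G - {\<one>})" using fin by simp
  have "meas p (carrier G) (\<lambda>S. enat d < cayley_diam G S) \<le> meas p (carrier G) (\<lambda>S. True \<and> (\<exists>k\<in>carrier G - {\<one>}. Ev k S))"
  proof (rule meas_mono[OF fin p p0(3)])
    fix S assume "enat d < cayley_diam G S"
    then have "\<not> cayley_diam G S \<le> enat d" by simp
    then show "True \<and> (\<exists>k\<in>carrier G - {\<one>}. Ev k S)"
      using diam_le[of d S] unfolding Ev_def by blast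
  qed
  also have "\<dots> \<le> (\<Sum>k\<in>carrier G - {\<one>}. meas p (carrier G) (\<lambda>S. True \<and> Ev k S))"
    by (rule meas_union_bound[OF fin finK p p0(3)])
  also have "\<dots> \<le> (\<Sum>k\<in>carrier G - {\<one>}. exp (- (1 + \<epsilon> / 2) * L))"
  proof (rule sum_mono)
    fix k assume k: "k \<in> carrier G - {\<one>}"
    have "meas p (carrier G) (\<lambda>S. True \<and> Ev k S) = meas p (carrier G) (Ev k)" by simp
    also have "\<dots> \<le> meas p0 (carrier G) (Ev k)"
      unfolding Ev_def by (rule meas_antimono_p[OF fin _ p0(2) p0(3) ev_antimono]) (use p0 in simp)
    also have "\<dots> \<le> exp (- (1 + \<epsilon> / 2) * L)" unfolding Ev_def
      by (rule perk_final[OF fin Ndef d \<epsilon> Ldef L0 lnL dL C2 C3 C4 C5 p0(1) _ p0(4)]) (use k p0 in auto)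
    finally show "meas p (carrier G) (\<lambda>S. True \<and> Ev k S) \<le> exp (- (1 + \<epsilon> / 2) * L)" .
  qed
  also have "\<dots> = real (card (carrier G - {\<one>})) * exp (- (1 + \<epsilon> / 2) * L)" by simp
  also have "\<dots> \<le> real N * exp (- (1 + \<epsilon> / 2) * L)"
    using fin Ndef by (intro mult_right_mono) (auto intro: card_mono)
  finally show ?thesis .
qed

end

theorem theorem1:
  fixes \<epsilon> \<gamma> \<delta> :: real
  assumes "\<epsilon> > 0" and "0 < \<gamma>" and "\<gamma> < 1" and "\<delta> > 0"
  shows "\<exists>N0::nat. \<forall>N \<ge> N0. \<forall>(G :: ('a, 'b) monoid_scheme) (d :: nat) (p :: real).
           group G \<and> finite (carrier G) \<and> card (carrier G) = N \<and>
           2 \<le> d \<and> real d \<le> d_bound \<gamma> N \<and>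
           root d (fact d * (1 + \<epsilon>) * ln (real N) / real N ^ (d - 1)) \<le> p \<and> p \<le> 1
           \<longrightarrow> measure_pmf.prob (random_subset G p)
                 {f. cayley_diam G {g \<in> carrier G. f g} > enat d} < \<delta>"
proof -
  note \<epsilon> = assms(1) and \<gamma> = assms(2,3) and \<delta> = assms(4)
  define K where "K = ln 16 + ln (1 + 1 / \<epsilon>) + 2 * ln (1 + \<epsilon>)"
  define \<beta> where "\<beta> = \<epsilon> / (4 * (1 + \<epsilon>))"
  have \<beta>0: "\<beta> > 0" using \<epsilon> by (simp add: \<beta>_def)
  define P where "P = (\<lambda>x::real. 0 < ln x \<and> 1 \<le> ln (ln x) \<and> sqrt (ln x) * (K + 2 * ln (ln x)) \<le> ln x / 2 \<and>
     2 * ln x / x \<le> \<beta> \<and> 4 \<le> \<beta> * x \<and> 4 * (1 + \<epsilon> / 2)\<^sup>2 * ln x \<le> \<beta>\<^sup>2 * x \<and> exp (- (\<epsilon> * ln x / 2)) < \<delta>)"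
  have ev: "\<forall>\<^sub>F x in at_top. P x"
  proof -
    have e1: "\<forall>\<^sub>F x in at_top. 0 < ln (x::real)" by real_asymp
    have e2: "\<forall>\<^sub>F x in at_top. 1 \<le> ln (ln (x::real))" by real_asymp
    have e3: "\<forall>\<^sub>F x in at_top. sqrt (ln x) * (K + 2 * ln (ln x)) \<le> ln (x::real) / 2" by real_asymp
    have e4: "\<forall>\<^sub>F x in at_top. 2 * ln x / x \<le> \<beta>" using \<beta>0 by real_asymp
    have e5: "\<forall>\<^sub>F x in at_top. 4 \<le> \<beta> * x" using \<beta>0 by real_asymp
    have e6: "\<forall>\<^sub>F x in at_top. 4 * (1 + \<epsilon> / 2)\<^sup>2 * ln x \<le> \<beta>\<^sup>2 * x" using \<beta>0 by real_asymp
    have e7: "\<forall>\<^sub>F x in at_top. exp (- (\<epsilon> * ln x / 2)) < \<delta>" using \<epsilon> \<delta> by real_asymp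
    show ?thesis unfolding P_def using e1 e2 e3 e4 e5 e6 e7 by (intro eventually_conj)
  qed
  have "\<forall>\<^sub>F n in sequentially. P (real n)"
    by (rule eventually_compose_filterlim[OF ev filterlim_real_sequentially])
  then obtain N0 where N0: "\<And>n. n \<ge> N0 \<Longrightarrow> P (real n)" by (auto simp: eventually_sequentially)
  show ?thesis
  proof (intro exI[of _ N0] allI impI)
    fix N :: nat and G :: "('a, 'b) monoid_scheme" and d :: nat and p :: real
    assume N: "N \<ge> N0"
    assume H: "group G \<and> finite (carrier G) \<and> card (carrier G) = N \<and>
           2 \<le> d \<and> real d \<le> d_bound \<gamma> N \<and>
           root d (fact d * (1 + \<epsilon>) * ln (real N) / real N ^ (d - 1)) \<le> p \<and> p \<le> 1"
    interpret group G using H by simp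
    define L where "L = ln (real N)"
    have PN: "P (real N)" using N0 N by simp
    have L0: "L > 0" and lnL: "ln L \<ge> 1" and C2: "sqrt L * (K + 2 * ln L) \<le> L / 2"
      and C3: "2 * L / real N \<le> \<beta>" and C4: "4 \<le> \<beta> * real N" and C5: "4 * (1 + \<epsilon> / 2)\<^sup>2 * L \<le> \<beta>\<^sup>2 * real N"
      and C6: "exp (- (\<epsilon> * L / 2)) < \<delta>"
      using PN by (auto simp: P_def L_def)
    have fin: "finite (carrier G)" and Ndef: "N = card (carrier G)" and d: "d \<ge> 2"
      and db: "real d \<le> d_bound \<gamma> N" and pr: "root d (fact d * (1 + \<epsilon>) * L / real N ^ (d - 1)) \<le> p"
      and p1: "p \<le> 1" using H by (auto simp: L_def)
    have Npos: "real N > 0"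
    proof (rule ccontr)
      assume "\<not> real N > 0"
      then have "N = 0" by simp
      then show False using L0 by (simp add: L_def)
    qed
    have lnLpos: "ln L > 0" using lnL by simp
    have dL: "real d ^ 2 \<le> L / (2 * ln L)"
    proof -
      have a0: "L / (2 * ln L) \<ge> 0" using L0 lnLpos by simp
      have "real d \<le> (1 - \<gamma>) * sqrt (L / (2 * ln L))" using db by (simp add: d_bound_def L_def)
      also have "\<dots> \<le> sqrt (L / (2 * ln L))" using \<gamma> a0 by (intro mult_left_le_one_le) auto
      finally have "real d \<le> sqrt (L / (2 * ln L))" .
      then have "real d ^ 2 \<le> (sqrt (L / (2 * ln L))) ^ 2" by (intro power_mono) auto
      then show ?thesis using a0 by simp
    qed
    define arg where "arg = fact d * (1 + \<epsilon>) * L / real N ^ (d - 1)"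
    define p0 where "p0 = root d arg"
    have arg0: "arg > 0" unfolding arg_def using \<epsilon> L0 Npos by (intro divide_pos_pos mult_pos_pos) auto
    have dpos: "0 < d" using d by simp
    have p0pos: "p0 > 0" unfolding p0_def using arg0 dpos by simp
    have p0d: "p0 ^ d = arg" unfolding p0_def using arg0 dpos by simp
    have p0p: "p0 \<le> p" using pr by (simp add: p0_def arg_def)
    have "measure_pmf.prob (random_subset G p) {f. cayley_diam G {g \<in> carrier G. f g} > enat d}
        = meas p (carrier G) (\<lambda>S. enat d < cayley_diam G S)"
      unfolding random_subset_def using prob_eq_meas[OF fin, of p "\<lambda>S. enat d < cayley_diam G S"] p0pos p0p p1 by simp
    also have "\<dots> \<le> real N * exp (- (1 + \<epsilon> / 2) * L)"
      by (rule main_bound[OF fin Ndef d \<epsilon> L_def L0 lnL dL])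
         (use C2 C3 C4 C5 p0pos p0p p1 p0d in \<open>auto simp: K_def \<beta>_def arg_def algebra_simps\<close>)
    also have "\<dots> = exp (- (\<epsilon> * L / 2))"
    proof -
      have "real N = exp L" using Npos by (simp add: L_def)
      then have "real N * exp (- (1 + \<epsilon> / 2) * L) = exp (L + - (1 + \<epsilon> / 2) * L)" by (simp add: exp_add)
      also have "L + - (1 + \<epsilon> / 2) * L = - (\<epsilon> * L / 2)" by (simp add: algebra_simps)
      finally show ?thesis .
    qed
    also have "\<dots> < \<delta>" by (rule C6)
    finally show "measure_pmf.prob (random_subset G p) {f. cayley_diam G {g \<in> carrier G. f g} > enat d} < \<delta>" .
  qed
qed

end
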